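(* Let $\Sigma$ be a surface isometrically immersed into a geodesic ball $B_R\subset\mathbb{R}^3$ of radius $R$. Suppose that $\Sigma$ has at least one end which is an end of revolution in $\mathbb{R}^3$. Then its mean curvature vector field $\vec H$ satisfies $\sup_{x\in\Sigma}\|\vec H(x)\|\ge\frac{1}{R}$.
   Context: An end of revolution in $\mathbb{R}^3$ is the image of $(t,\theta)\mapsto R_\theta(\beta(t))$, where $\beta:[0,\infty)\to P$ is a smooth regular curve of infinite length in a plane $P$ containing a line $\ell$, $\beta$ does not meet $\ell$, and $R_\theta$ ranges over the rotations of $\mathbb{R}^3$ about $\ell$. *)

theory Defs
  imports "HOL-Analysis.Analysis"
begin

definition partial1 :: "(real \<times> real \<Rightarrow> 'b::real_normed_vector) \<Rightarrow> real \<times> real \<Rightarrow> 'b" where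
  "partial1 g = (\<lambda>(s,t). vector_derivative (\<lambda>s'. g (s',t)) (at s))"

definition partial2 :: "(real \<times> real \<Rightarrow> 'b::real_normed_vector) \<Rightarrow> real \<times> real \<Rightarrow> 'b" where
  "partial2 g = (\<lambda>(s,t). vector_derivative (\<lambda>t'. g (s,t')) (at t))"

inductive_set iter_partials :: "(real \<times> real \<Rightarrow> 'b::real_normed_vector) \<Rightarrow> (real \<times> real \<Rightarrow> 'b) set"
  for f where
  base: "f \<in> iter_partials f"
| d1: "g \<in> iter_partials f \<Longrightarrow> partial1 g \<in> iter_partials f"
| d2: "g \<in> iter_partials f \<Longrightarrow> partial2 g \<in> iter_partials f"

definition smooth2_on :: "(real \<times> real) set \<Rightarrow> (real \<times> real \<Rightarrow> 'b::real_normed_vector) \<Rightarrow> bool" where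
  "smooth2_on U f \<longleftrightarrow> open U \<and>
     (\<forall>g \<in> iter_partials f. continuous_on U g \<and>
        (\<forall>s t. (s,t) \<in> U \<longrightarrow>
            (\<lambda>s'. g (s',t)) differentiable (at s) \<and> (\<lambda>t'. g (s,t')) differentiable (at t)))"

inductive_set curve_derivs :: "real set \<Rightarrow> (real \<Rightarrow> 'b::real_normed_vector) \<Rightarrow> (real \<Rightarrow> 'b) set"
  for S f where
  base: "f \<in> curve_derivs S f"
| step: "g \<in> curve_derivs S f \<Longrightarrow> (\<lambda>t. vector_derivative g (at t within S)) \<in> curve_derivs S f"

definition smooth_curve_on :: "real set \<Rightarrow> (real \<Rightarrow> 'b::real_normed_vector) \<Rightarrow> bool" where
  "smooth_curve_on S f \<longleftrightarrow> (\<forall>g \<in> curve_derivs S f. \<forall>t\<in>S. g differentiable (at t within S))"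

definition compatible_params ::
  "(real \<times> real) set \<times> (real \<times> real \<Rightarrow> 'a) \<Rightarrow> (real \<times> real) set \<times> (real \<times> real \<Rightarrow> 'a) \<Rightarrow> bool" where
  "compatible_params P Q \<longleftrightarrow>
     (let U = fst P; p = snd P; V = fst Q; q = snd Q;
          W = {u \<in> U. p u \<in> q ` V}
      in open W \<and> smooth2_on W (inv_into V q \<circ> p))"

definition surface_atlas :: "'a set \<Rightarrow> ((real \<times> real) set \<times> (real \<times> real \<Rightarrow> 'a)) set \<Rightarrow> bool" where
  "surface_atlas M A \<longleftrightarrow>
     (\<forall>(U,p) \<in> A. open U \<and> inj_on p U \<and> p ` U \<subseteq> M) \<and>
     M = (\<Union>(U,p) \<in> A. p ` U) \<and>
     (\<forall>P \<in> A. \<forall>Q \<in> A. compatible_params P Q)"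

definition surf_top :: "'a set \<Rightarrow> ((real \<times> real) set \<times> (real \<times> real \<Rightarrow> 'a)) set \<Rightarrow> 'a topology" where
  "surf_top M A = topology (\<lambda>S. S \<subseteq> M \<and> (\<forall>(U,p) \<in> A. open {u \<in> U. p u \<in> S}))"

definition immersion_on :: "(real \<times> real) set \<Rightarrow> (real \<times> real \<Rightarrow> real^3) \<Rightarrow> bool" where
  "immersion_on U X \<longleftrightarrow> smooth2_on U X \<and>
     (\<forall>u \<in> U. cross3 (partial1 X u) (partial2 X u) \<noteq> 0)"

text \<open>Mean curvature vector (normalised: H = ((k1 + k2)/2) N) of a parametrized surface
  with the induced (pull-back) metric, via the first and second fundamental forms.\<close>
definition mean_curv_vec :: "(real \<times> real \<Rightarrow> real^3) \<Rightarrow> real \<times> real \<Rightarrow> real^3" where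
  "mean_curv_vec X u =
     (let Xs = partial1 X u; Xt = partial2 X u;
          Xss = partial1 (partial1 X) u; Xst = partial2 (partial1 X) u;
          Xtt = partial2 (partial2 X) u;
          E = Xs \<bullet> Xs; F = Xs \<bullet> Xt; G = Xt \<bullet> Xt;
          N = (1 / norm (cross3 Xs Xt)) *\<^sub>R cross3 Xs Xt;
          L = Xss \<bullet> N; M = Xst \<bullet> N; NN = Xtt \<bullet> N
      in ((E * NN - 2 * F * M + G * L) / (2 * (E * G - F\<^sup>2))) *\<^sub>R N)"

text \<open>F : M \<rightarrow> R^3 is an immersion of the surface (M, A); it is isometric for the induced metric.\<close>
definition surface_immersion :: "'a set \<Rightarrow> ((real \<times> real) set \<times> (real \<times> real \<Rightarrow> 'a)) set \<Rightarrow> ('a \<Rightarrow> real^3) \<Rightarrow> bool" where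
  "surface_immersion M A F \<longleftrightarrow> surface_atlas M A \<and> (\<forall>(U,p) \<in> A. immersion_on U (F \<circ> p))"

definition rot_about :: "real^3 \<Rightarrow> real^3 \<Rightarrow> real \<Rightarrow> real^3 \<Rightarrow> real^3" where
  "rot_about a v \<theta> x =
     a + ((x - a) \<bullet> v) *\<^sub>R v + cos \<theta> *\<^sub>R ((x - a) - ((x - a) \<bullet> v) *\<^sub>R v)
       + sin \<theta> *\<^sub>R cross3 v (x - a)"

definition revolution_end_data :: "real^3 \<Rightarrow> real^3 \<Rightarrow> real^3 \<Rightarrow> (real \<Rightarrow> real^3) \<Rightarrow> bool" where
  "revolution_end_data a v n \<beta> \<longleftrightarrow>
     norm v = 1 \<and> norm n = 1 \<and> v \<bullet> n = 0 \<and>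
     (\<forall>t \<ge> 0. (\<beta> t - a) \<bullet> n = 0) \<and>
     (\<forall>t \<ge> 0. \<forall>s. \<beta> t \<noteq> a + s *\<^sub>R v) \<and>
     smooth_curve_on {0..} \<beta> \<and>
     (\<forall>t \<ge> 0. vector_derivative \<beta> (at t within {0..}) \<noteq> 0) \<and>
     (\<forall>B. \<exists>T \<ge> 0. integral {0..T} (\<lambda>t. norm (vector_derivative \<beta> (at t within {0..}))) > B)"

definition revolution_map :: "real^3 \<Rightarrow> real^3 \<Rightarrow> (real \<Rightarrow> real^3) \<Rightarrow> real \<times> real \<Rightarrow> real^3" where
  "revolution_map a v \<beta> = (\<lambda>(t,\<theta>). rot_about a v \<theta> (\<beta> t))"

text \<open>The immersed surface (M, A, F) has an end which is an end of revolution: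
  there is a map p from [0,\<infinity>) \<times> R (2\<pi>-periodic in \<theta>, injective modulo 2\<pi>, i.e. from
  [0,\<infinity>) \<times> S^1) into M, continuous for the manifold topology, whose restrictions to the
  open part t > 0 are local parametrizations compatible with the atlas, such that
  p({t > 0}) is a connected component of M - K for some compact K containing the boundary
  circle p({0} \<times> R) (so the end lies at t \<rightarrow> \<infinity>), and F \<circ> p = R_\<theta>(\<beta>(t)).\<close>
definition has_revolution_end ::
  "'a set \<Rightarrow> ((real \<times> real) set \<times> (real \<times> real \<Rightarrow> 'a)) set \<Rightarrow> ('a \<Rightarrow> real^3) \<Rightarrow> bool" where
  "has_revolution_end M A F \<longleftrightarrow>
     (\<exists>a v n \<beta> (p :: real \<times> real \<Rightarrow> 'a) K.
        revolution_end_data a v n \<beta> \<and>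
        continuous_map (top_of_set {z. fst z \<ge> 0}) (surf_top M A) p \<and>
        (\<forall>t \<theta>. p (t, \<theta> + 2 * pi) = p (t, \<theta>)) \<and>
        inj_on p {z. fst z \<ge> 0 \<and> 0 \<le> snd z \<and> snd z < 2 * pi} \<and>
        (\<forall>V. open V \<and> V \<subseteq> {z. fst z > 0} \<and> inj_on p V \<longrightarrow>
             (\<forall>P \<in> A. compatible_params (V, p) P \<and> compatible_params P (V, p))) \<and>
        compactin (surf_top M A) K \<and>
        p ` {z. fst z = 0} \<subseteq> K \<and>
        p ` {z. fst z > 0} \<in> connected_components_of (subtopology (surf_top M A) (M - K)) \<and>
        (\<forall>z. fst z \<ge> 0 \<longrightarrow> F (p z) = revolution_map a v \<beta> z))"

end

theory Submission
  imports Defs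
begin



lemma poly_id:
  fixes xt y x1 y1 x2 y2 lam :: real
  shows "(x1^2+y1^2) * (y1 * (2* xt* x1 + 2* y* y1 + lam* y1) + y * (2* x1* x1 + 2* xt* x2 + 2* y1* y1 + 2* y* y2 + lam* y2))
      - y * (2* xt* x1 + 2* y* y1 + lam* y1) * (x1* x2 + y1* y2)
     = (x1^2+y1^2)^2*(4* y+lam) - (x1*(x1^2+y1^2) - y*(x1* y2 - x2* y1))*(2*(y* x1 - xt* y1) + lam* x1)"
  by (simp add: algebra_simps power2_eq_square)

lemma gen1: fixes A B C s :: real assumes "s > 0"
  shows "(A * s - B * (C / s)) / (s * s) * s^3 = A * s^2 - B * C"
  using assms by (simp add: field_simps power2_eq_square power3_eq_cube)

lemma gen2: fixes P Q x y s :: real assumes "s > 0" "y > 0"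
  shows "(s * P - (x / (s * y) - Q / s^3) * y * W) * s^3 = (s^2)^2 * P - (x * s^2 - y * Q) * W"
  using assms by (simp add: field_simps power2_eq_square power3_eq_cube)

lemma Zid:
  fixes xt y x1 y1 x2 y2 lam s :: real
  assumes s: "s > 0" "s^2 = x1^2+y1^2" and y: "y > 0"
  shows "((y1 * (2* xt* x1 + 2* y* y1 + lam* y1) + y * (2* x1* x1 + 2* xt* x2 + 2* y1* y1 + 2* y* y2 + lam* y2)) * s
      - y * (2* xt* x1 + 2* y* y1 + lam* y1) * ((x1* x2 + y1* y2)/s)) / (s * s)
     = s * (4* y+lam) - (x1/(s * y) - (x1* y2 - x2* y1)/s^3)* y*(2*(y* x1 - xt* y1) + lam* x1)"
proof -
  have "s^3 > 0" using s by simp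
  moreover have eq: "((y1 * (2* xt* x1 + 2* y* y1 + lam* y1) + y * (2* x1* x1 + 2* xt* x2 + 2* y1* y1 + 2* y* y2 + lam* y2)) * s
      - y * (2* xt* x1 + 2* y* y1 + lam* y1) * ((x1* x2 + y1* y2)/s)) / (s * s) * s^3
     = (s * (4* y+lam) - (x1/(s * y) - (x1* y2 - x2* y1)/s^3)* y*(2*(y* x1 - xt* y1) + lam* x1)) * s^3"
    unfolding gen1[OF s(1)] gen2[OF s(1) y] s(2) using poly_id[of x1 y1 xt y lam x2 y2] by (simp only: mult.commute)
  ultimately show ?thesis by (intro mult_right_cancel[THEN iffD1, OF _ eq]) simp
qed

lemma Zbound_deriv:
  fixes xt y x1 y1 k lam s h R :: real
  assumes s: "s > 0" "s^2 = x1^2+y1^2" and y: "y > 0" and bd: "xt^2 + y^2 \<le> R^2" and R: "R > 0"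
    and kb: "\<bar>k\<bar> \<le> 2* h" and h: "h \<ge> 0" and lam: "lam \<ge> 0" "2* h* lam \<le> 4*(1-h* R)"
  shows "s * (4* y+lam) - k* y*(2*(y* x1 - xt* y1) + lam* x1) \<ge> lam * s"
proof -
  have c1: "(y* x1 - xt* y1)^2 \<le> (R * s)^2"
  proof -
    have "(y* x1 - xt* y1)^2 \<le> (xt^2+y^2)*(x1^2+y1^2)"
      using sum_power2_ge_zero[of "xt* x1+y* y1" 0]
      by (simp add: power2_eq_square algebra_simps)
    also have "\<dots> \<le> R^2 * s^2" using bd s(2) by (simp add: mult_right_mono)
    finally show ?thesis by (simp add: power_mult_distrib)
  qed
  have a1: "\<bar>y* x1 - xt* y1\<bar> \<le> R * s" using c1 R s by (simp add: abs_le_square_iff power_mult_distrib) (metis abs_of_pos mult_pos_pos abs_le_square_iff c1)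
  have a2: "\<bar>x1\<bar> \<le> s"
  proof -
    have "x1^2 \<le> s^2" using s(2) by simp
    then show ?thesis using s abs_le_square_iff[of x1 s] by simp
  qed
  have "\<bar>2*(y* x1 - xt* y1) + lam* x1\<bar> \<le> 2*\<bar>y* x1 - xt* y1\<bar> + lam*\<bar>x1\<bar>"
    using abs_triangle_ineq[of "2*(y* x1 - xt* y1)" "lam* x1"] lam abs_mult[of 2 "y* x1 - xt* y1"] abs_mult[of lam x1]
    by simp
  also have "\<dots> \<le> 2*(R * s) + lam * s" using a1 a2 lam by (intro add_mono mult_left_mono) auto
  finally have W: "\<bar>2*(y* x1 - xt* y1) + lam* x1\<bar> \<le> 2*(R * s) + lam * s" .
  have "\<bar>k* y*(2*(y* x1 - xt* y1) + lam* x1)\<bar> = \<bar>k\<bar>* y*\<bar>2*(y* x1 - xt* y1) + lam* x1\<bar>"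
    using y by (simp add: abs_mult)
  also have "\<dots> \<le> (2* h)* y*(2*(R * s) + lam * s)"
    using kb y h W by (intro mult_mono) auto
  finally have K: "\<bar>k* y*(2*(y* x1 - xt* y1) + lam* x1)\<bar> \<le> (2* h)* y*(2*(R * s) + lam * s)" .
  have "(2* h)* y*(2*(R * s) + lam * s) \<le> s*(4* y)"
  proof -
    have "2* h*(2* R+lam) \<le> 4" using lam h R by (simp add: algebra_simps)
    then have "(2* h*(2* R+lam)) * (y * s) \<le> 4 * (y * s)" using y s by (intro mult_right_mono) auto
    then show ?thesis by (simp add: algebra_simps)
  qed
  then show ?thesis using K by (simp add: algebra_simps abs_le_iff)
qed


lemma profile_false:
  fixes xt y x1 y1 x2 y2 :: "real \<Rightarrow> real" and R h :: real
  assumes R: "R > 0" and h: "h \<ge> 0" "h* R < 1"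
    and dxt: "\<And>t. t > 0 \<Longrightarrow> (xt has_real_derivative x1 t) (at t)"
    and dy: "\<And>t. t > 0 \<Longrightarrow> (y has_real_derivative y1 t) (at t)"
    and dx1: "\<And>t. t > 0 \<Longrightarrow> (x1 has_real_derivative x2 t) (at t)"
    and dy1: "\<And>t. t > 0 \<Longrightarrow> (y1 has_real_derivative y2 t) (at t)"
    and ypos: "\<And>t. t > 0 \<Longrightarrow> y t > 0"
    and sp: "\<And>t. t > 0 \<Longrightarrow> x1 t^2 + y1 t^2 > 0"
    and bd: "\<And>t. t > 0 \<Longrightarrow> xt t^2 + y t^2 \<le> R^2"
    and kb: "\<And>t. t > 0 \<Longrightarrow> \<bar>x1 t/(sqrt(x1 t^2+y1 t^2) * y t) - (x1 t* y2 t - x2 t* y1 t)/sqrt(x1 t^2+y1 t^2)^3\<bar> \<le> 2* h"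
    and len: "\<And>B. \<exists>T\<ge>1. integral {1..T} (\<lambda>t. sqrt(x1 t^2+y1 t^2)) > B"
  shows False
proof -
  define lam where "lam = (1 - h* R)/(h+1)"
  have lam0: "lam > 0" using h unfolding lam_def by simp
  have lam1: "2* h* lam \<le> 4*(1-h* R)"
  proof -
    define q where "q = h*(1-h* R)/(h+1)"
    have "h/(h+1) \<le> 1" using h by simp
    then have "h/(h+1)*(1-h* R) \<le> 1*(1-h* R)" using h by (intro mult_right_mono) auto
    then have q1: "q \<le> 1-h* R" unfolding q_def by simp
    have "2* h* lam = 2* q" by (simp add: lam_def q_def)
    then show ?thesis using q1 h by (smt (verit))
  qed
  define sig where "sig t = sqrt(x1 t^2+y1 t^2)" for t
  define P where "P t = 2* xt t* x1 t + 2* y t* y1 t + lam* y1 t" for t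
  define Z where "Z t = y t * P t / sig t" for t
  define D where "D t = sig t * (4* y t+lam) - (x1 t/(sig t * y t) - (x1 t* y2 t - x2 t* y1 t)/sig t^3)* y t*(2*(y t* x1 t - xt t* y1 t) + lam* x1 t)" for t
  have sigpos: "sig t > 0" if "t > 0" for t using sp[OF that] unfolding sig_def by simp
  have sig2: "(sig t)^2 = x1 t^2+y1 t^2" if "t > 0" for t using sp[OF that] unfolding sig_def by simp
  have dZ: "(Z has_real_derivative D t) (at t)" if t: "t > 0" for t
  proof -
    have dP: "(P has_real_derivative (2* x1 t* x1 t + 2* xt t* x2 t + 2* y1 t* y1 t + 2* y t* y2 t + lam* y2 t)) (at t)"
      unfolding P_def[abs_def]
      by (rule derivative_eq_intros dxt dy dx1 dy1 t refl | simp)+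
    have dsig: "(sig has_real_derivative ((x1 t* x2 t + y1 t* y2 t)/sig t)) (at t)"
    proof -
      have "((\<lambda>t. x1 t^2+y1 t^2) has_real_derivative (2* x1 t* x2 t + 2* y1 t* y2 t)) (at t)"
        by (rule derivative_eq_intros dxt dy dx1 dy1 t refl | simp)+
      from DERIV_chain2[OF DERIV_real_sqrt[OF sp[OF t]] this]
      show ?thesis unfolding sig_def[abs_def]
        by (rule DERIV_cong) (simp add: divide_simps algebra_simps)
    qed
    have "((\<lambda>t. y t * P t / sig t) has_real_derivative
        ((y1 t * P t + y t * (2* x1 t* x1 t + 2* xt t* x2 t + 2* y1 t* y1 t + 2* y t* y2 t + lam* y2 t)) * sig t
          - y t * P t * ((x1 t* x2 t + y1 t* y2 t)/sig t)) / (sig t * sig t)) (at t)"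
      by (rule DERIV_cong[OF DERIV_divide[OF DERIV_mult[OF dy[OF t] dP] dsig]]) (use sigpos[OF t] in \<open>simp_all add: algebra_simps\<close>)
    also have "((y1 t * P t + y t * (2* x1 t* x1 t + 2* xt t* x2 t + 2* y1 t* y1 t + 2* y t* y2 t + lam* y2 t)) * sig t
          - y t * P t * ((x1 t* x2 t + y1 t* y2 t)/sig t)) / (sig t * sig t) = D t"
      unfolding D_def P_def by (rule Zid[OF sigpos[OF t] sig2[OF t] ypos[OF t]])
    finally show ?thesis unfolding Z_def[abs_def] .
  qed
  have Dge: "D t \<ge> lam * sig t" if t: "t > 0" for t
    unfolding D_def
    by (rule Zbound_deriv[OF sigpos[OF t] sig2[OF t] ypos[OF t] bd[OF t] R _ h(1) less_imp_le[OF lam0] lam1])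
       (use kb[OF t] in \<open>simp add: sig_def\<close>)
  have Zb: "\<bar>Z t\<bar> \<le> R*(2* R+lam)" if t: "t > 0" for t
  proof -
    have a: "\<bar>xt t\<bar> \<le> R" "\<bar>y t\<bar> \<le> R"
      using bd[OF t] R abs_le_square_iff[of "xt t" R] abs_le_square_iff[of "y t" R]
      by (auto intro: order_trans[OF _ bd[OF t]])
    have b: "\<bar>x1 t\<bar> \<le> sig t" "\<bar>y1 t\<bar> \<le> sig t"
      using sig2[OF t] sigpos[OF t] abs_le_square_iff[of "x1 t" "sig t"] abs_le_square_iff[of "y1 t" "sig t"]
      by auto
    have "\<bar>xt t* x1 t + y t* y1 t\<bar> \<le> R * sig t"
    proof -
      have "(xt t* x1 t + y t* y1 t)^2 \<le> (xt t^2 + y t^2)*(x1 t^2+y1 t^2)"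
        using sum_power2_ge_zero[of "xt t* y1 t - y t* x1 t" 0] by (simp add: power2_eq_square algebra_simps)
      also have "\<dots> \<le> R^2 * (sig t)^2" using bd[OF t] sig2[OF t] by (simp add: mult_right_mono)
      finally show ?thesis using R sigpos[OF t] abs_le_square_iff[of "xt t* x1 t + y t* y1 t" "R * sig t"]
        by (simp add: power_mult_distrib)
    qed
    then have PB0: "\<bar>xt t * x1 t + y t * y1 t\<bar> \<le> R * sig t" .
    have "\<bar>P t\<bar> \<le> 2 * \<bar>xt t * x1 t + y t * y1 t\<bar> + lam * \<bar>y1 t\<bar>"
      unfolding P_def using abs_triangle_ineq[of "2 * (xt t * x1 t + y t * y1 t)" "lam * y1 t"]
        abs_mult[of lam "y1 t"] abs_mult[of 2 "xt t * x1 t + y t * y1 t"] lam0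
      by (simp add: algebra_simps)
    also have "\<dots> \<le> 2 * (R * sig t) + lam * sig t"
      using PB0 b lam0 by (intro add_mono mult_left_mono) auto
    finally have "\<bar>P t\<bar> \<le> 2 * (R * sig t) + lam * sig t" .
    then have "\<bar>y t * P t\<bar> \<le> R * ((2* R+lam)* sig t)"
      using a(2) unfolding abs_mult by (intro mult_mono) (auto simp: algebra_simps)
    then show ?thesis unfolding Z_def using sigpos[OF t] by (simp add: abs_divide pos_divide_le_eq mult.assoc)
  qed
  have sigc: "continuous_on {1..T} sig" for T
  proof -
    have "continuous_on {1..T} x1" "continuous_on {1..T} y1"
      using DERIV_isCont[OF dx1] DERIV_isCont[OF dy1] by (auto intro!: continuous_at_imp_continuous_on)
    then show ?thesis unfolding sig_def[abs_def] by (intro continuous_intros)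
  qed
  obtain T where T: "T \<ge> 1" "integral {1..T} sig > 2* R*(2* R+lam)/lam"
    using len[of "2* R*(2* R+lam)/lam"] unfolding sig_def[abs_def] by auto
  have I1: "(D has_integral (Z T - Z 1)) {1..T}"
    by (rule fundamental_theorem_of_calculus[OF T(1)])
       (auto simp: has_real_derivative_iff_has_vector_derivative[symmetric] intro!: has_field_derivative_at_within dZ)
  have I2: "((\<lambda>t. lam * sig t) has_integral lam * integral {1..T} sig) {1..T}"
    using integrable_continuous_real[OF sigc] by (intro has_integral_mult_right) (simp add: integrable_integral)
  have "lam * integral {1..T} sig \<le> Z T - Z 1"
    by (rule has_integral_le[OF I2 I1]) (rule Dge, auto)
  also have "\<dots> \<le> 2*(R*(2* R+lam))" using Zb[of T] Zb[of 1] T(1) by auto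
  finally have "integral {1..T} sig \<le> 2* R*(2* R+lam)/lam" using lam0 by (simp add: field_simps)
  then show False using T(2) by simp
qed



lemma eventually_slice1:
  fixes s t :: real
  assumes "open W" "(s,t) \<in> W"
  shows "eventually (\<lambda>s'. (s',t) \<in> W) (nhds s)"
proof -
  obtain e where e: "e > 0" "ball (s,t) e \<subseteq> W" using assms open_contains_ball by blast
  have "eventually (\<lambda>s'. dist s' s < e) (nhds s)" using e(1) eventually_nhds_metric by blast
  then show ?thesis
    by eventually_elim (use e in \<open>auto simp: dist_Pair_Pair dist_commute subset_iff\<close>)
qed

lemma eventually_slice2:
  fixes s t :: real
  assumes "open W" "(s,t) \<in> W"
  shows "eventually (\<lambda>t'. (s,t') \<in> W) (nhds t)"
proof -
  obtain e where e: "e > 0" "ball (s,t) e \<subseteq> W" using assms open_contains_ball by blast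
  have "eventually (\<lambda>t'. dist t' t < e) (nhds t)" using e(1) eventually_nhds_metric by blast
  then show ?thesis
    by eventually_elim (use e in \<open>auto simp: dist_Pair_Pair dist_commute subset_iff\<close>)
qed

lemma partial1_cong:
  assumes "open W" "\<And>z. z \<in> W \<Longrightarrow> f z = g z" "z \<in> W"
  shows "partial1 f z = partial1 g z"
proof -
  obtain s t where z: "z = (s,t)" by fastforce
  have "vector_derivative (\<lambda>s'. f (s',t)) (at s) = vector_derivative (\<lambda>s'. g (s',t)) (at s)"
    by (rule vector_derivative_cong_eq)
       (use eventually_slice1[OF assms(1), of s t] assms z in \<open>auto elim: eventually_mono\<close>)
  then show ?thesis unfolding partial1_def z by simp
qed

lemma partial2_cong:
  assumes "open W" "\<And>z. z \<in> W \<Longrightarrow> f z = g z" "z \<in> W"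
  shows "partial2 f z = partial2 g z"
proof -
  obtain s t where z: "z = (s,t)" by fastforce
  have "vector_derivative (\<lambda>t'. f (s,t')) (at t) = vector_derivative (\<lambda>t'. g (s,t')) (at t)"
    by (rule vector_derivative_cong_eq)
       (use eventually_slice2[OF assms(1), of s t] assms z in \<open>auto elim: eventually_mono\<close>)
  then show ?thesis unfolding partial2_def z by simp
qed

lemma chain_pair:
  fixes G :: "real \<times> real \<Rightarrow> 'b::real_normed_vector"
  assumes "(\<gamma> has_vector_derivative \<gamma>') (at r)"
    "(G has_derivative (\<lambda>h. fst h *\<^sub>R Ga + snd h *\<^sub>R Gb)) (at (\<gamma> r))"
  shows "((\<lambda>r. G (\<gamma> r)) has_vector_derivative (fst \<gamma>' *\<^sub>R Ga + snd \<gamma>' *\<^sub>R Gb)) (at r)"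
proof -
  have "((G \<circ> \<gamma>) has_derivative ((\<lambda>h. fst h *\<^sub>R Ga + snd h *\<^sub>R Gb) \<circ> (\<lambda>x. x *\<^sub>R \<gamma>'))) (at r)"
    using assms by (intro diff_chain_at) (auto simp: has_vector_derivative_def)
  moreover have "((\<lambda>h. fst h *\<^sub>R Ga + snd h *\<^sub>R Gb) \<circ> (\<lambda>x. x *\<^sub>R \<gamma>')) = (\<lambda>x. x *\<^sub>R (fst \<gamma>' *\<^sub>R Ga + snd \<gamma>' *\<^sub>R Gb))"
    by (auto simp: fun_eq_iff algebra_simps)
  ultimately show ?thesis by (simp add: has_vector_derivative_def o_def)
qed

lemma fst_vd: "(\<kappa> has_vector_derivative \<kappa>') (at r) \<Longrightarrow> ((\<lambda>r. fst (\<kappa> r)) has_real_derivative fst \<kappa>') (at r)"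
  unfolding has_real_derivative_iff_has_vector_derivative
  by (rule bounded_linear.has_vector_derivative[OF bounded_linear_fst])
lemma snd_vd: "(\<kappa> has_vector_derivative \<kappa>') (at r) \<Longrightarrow> ((\<lambda>r. snd (\<kappa> r)) has_real_derivative snd \<kappa>') (at r)"
  unfolding has_real_derivative_iff_has_vector_derivative
  by (rule bounded_linear.has_vector_derivative[OF bounded_linear_snd])

lemma chain_coef:
  fixes A B :: "real \<times> real \<Rightarrow> 'b::real_normed_vector" and \<kappa> :: "real \<Rightarrow> real \<times> real"
  assumes g: "(\<gamma> has_vector_derivative \<gamma>') (at r)"
    and k: "(\<kappa> has_vector_derivative \<kappa>') (at r)"
    and DA: "(A has_derivative (\<lambda>h. fst h *\<^sub>R Aa + snd h *\<^sub>R Ab)) (at (\<gamma> r))"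
    and DB: "(B has_derivative (\<lambda>h. fst h *\<^sub>R Ba + snd h *\<^sub>R Bb)) (at (\<gamma> r))"
  shows "((\<lambda>r. fst (\<kappa> r) *\<^sub>R A (\<gamma> r) + snd (\<kappa> r) *\<^sub>R B (\<gamma> r)) has_vector_derivative
    (fst \<kappa>' *\<^sub>R A (\<gamma> r) + snd \<kappa>' *\<^sub>R B (\<gamma> r) + fst (\<kappa> r) *\<^sub>R (fst \<gamma>' *\<^sub>R Aa + snd \<gamma>' *\<^sub>R Ab)
      + snd (\<kappa> r) *\<^sub>R (fst \<gamma>' *\<^sub>R Ba + snd \<gamma>' *\<^sub>R Bb))) (at r)"
proof -
  have 1: "((\<lambda>r. fst (\<kappa> r) *\<^sub>R A (\<gamma> r)) has_vector_derivative
      (fst (\<kappa> r) *\<^sub>R (fst \<gamma>' *\<^sub>R Aa + snd \<gamma>' *\<^sub>R Ab) + fst \<kappa>' *\<^sub>R A (\<gamma> r))) (at r)"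
    by (rule has_vector_derivative_scaleR[OF fst_vd[OF k] chain_pair[OF g DA]])
  have 2: "((\<lambda>r. snd (\<kappa> r) *\<^sub>R B (\<gamma> r)) has_vector_derivative
      (snd (\<kappa> r) *\<^sub>R (fst \<gamma>' *\<^sub>R Ba + snd \<gamma>' *\<^sub>R Bb) + snd \<kappa>' *\<^sub>R B (\<gamma> r))) (at r)"
    by (rule has_vector_derivative_scaleR[OF snd_vd[OF k] chain_pair[OF g DB]])
  from has_vector_derivative_add[OF 1 2] show ?thesis by (simp add: algebra_simps)
qed

lemma smooth_slice1:
  assumes "smooth2_on W f" "g \<in> iter_partials f" "(s,t) \<in> W"
  shows "((\<lambda>s'. g (s',t)) has_vector_derivative partial1 g (s,t)) (at s)"
  using assms unfolding smooth2_on_def partial1_def by (auto simp: vector_derivative_works[symmetric])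

lemma smooth_slice2:
  assumes "smooth2_on W f" "g \<in> iter_partials f" "(s,t) \<in> W"
  shows "((\<lambda>t'. g (s,t')) has_vector_derivative partial2 g (s,t)) (at t)"
  using assms unfolding smooth2_on_def partial2_def by (auto simp: vector_derivative_works[symmetric])

lemma partials_comp:
  fixes X Xa Xb Xaa Xab Xba Xbb :: "real \<times> real \<Rightarrow> 'b::real_normed_vector"
    and \<phi> :: "real \<times> real \<Rightarrow> real \<times> real"
  assumes DX: "\<And>z. z \<in> Om \<Longrightarrow> (X has_derivative (\<lambda>h. fst h *\<^sub>R Xa z + snd h *\<^sub>R Xb z)) (at z)"
    and DXa: "\<And>z. z \<in> Om \<Longrightarrow> (Xa has_derivative (\<lambda>h. fst h *\<^sub>R Xaa z + snd h *\<^sub>R Xab z)) (at z)"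
    and DXb: "\<And>z. z \<in> Om \<Longrightarrow> (Xb has_derivative (\<lambda>h. fst h *\<^sub>R Xba z + snd h *\<^sub>R Xbb z)) (at z)"
    and W: "open W" "\<phi> ` W \<subseteq> Om" and sm: "smooth2_on W \<phi>" and u: "u \<in> W"
  defines "a1 \<equiv> fst (partial1 \<phi> u)" and "b1 \<equiv> snd (partial1 \<phi> u)"
    and "a2 \<equiv> fst (partial2 \<phi> u)" and "b2 \<equiv> snd (partial2 \<phi> u)"
  shows "partial1 (X \<circ> \<phi>) u = a1 *\<^sub>R Xa (\<phi> u) + b1 *\<^sub>R Xb (\<phi> u)"
    and "partial2 (X \<circ> \<phi>) u = a2 *\<^sub>R Xa (\<phi> u) + b2 *\<^sub>R Xb (\<phi> u)"
    and "partial1 (partial1 (X \<circ> \<phi>)) u = fst (partial1 (partial1 \<phi>) u) *\<^sub>R Xa (\<phi> u) + snd (partial1 (partial1 \<phi>) u) *\<^sub>R Xb (\<phi> u)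
        + a1 *\<^sub>R (a1 *\<^sub>R Xaa (\<phi> u) + b1 *\<^sub>R Xab (\<phi> u)) + b1 *\<^sub>R (a1 *\<^sub>R Xba (\<phi> u) + b1 *\<^sub>R Xbb (\<phi> u))"
    and "partial2 (partial1 (X \<circ> \<phi>)) u = fst (partial2 (partial1 \<phi>) u) *\<^sub>R Xa (\<phi> u) + snd (partial2 (partial1 \<phi>) u) *\<^sub>R Xb (\<phi> u)
        + a1 *\<^sub>R (a2 *\<^sub>R Xaa (\<phi> u) + b2 *\<^sub>R Xab (\<phi> u)) + b1 *\<^sub>R (a2 *\<^sub>R Xba (\<phi> u) + b2 *\<^sub>R Xbb (\<phi> u))"
    and "partial2 (partial2 (X \<circ> \<phi>)) u = fst (partial2 (partial2 \<phi>) u) *\<^sub>R Xa (\<phi> u) + snd (partial2 (partial2 \<phi>) u) *\<^sub>R Xb (\<phi> u)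
        + a2 *\<^sub>R (a2 *\<^sub>R Xaa (\<phi> u) + b2 *\<^sub>R Xab (\<phi> u)) + b2 *\<^sub>R (a2 *\<^sub>R Xba (\<phi> u) + b2 *\<^sub>R Xbb (\<phi> u))"
proof -
  have ip0: "\<phi> \<in> iter_partials \<phi>" by (rule iter_partials.base)
  have ip1: "partial1 \<phi> \<in> iter_partials \<phi>" by (rule iter_partials.d1[OF ip0])
  have ip2: "partial2 \<phi> \<in> iter_partials \<phi>" by (rule iter_partials.d2[OF ip0])
  have P1: "partial1 (X \<circ> \<phi>) z = fst (partial1 \<phi> z) *\<^sub>R Xa (\<phi> z) + snd (partial1 \<phi> z) *\<^sub>R Xb (\<phi> z)" if z: "z \<in> W" for z
  proof -
    obtain s t where st: "z = (s,t)" by fastforce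
    have "((\<lambda>s'. X (\<phi> (s',t))) has_vector_derivative fst (partial1 \<phi> z) *\<^sub>R Xa (\<phi> z) + snd (partial1 \<phi> z) *\<^sub>R Xb (\<phi> z)) (at s)"
      using chain_pair[OF smooth_slice1[OF sm ip0, of s t], of X "Xa (\<phi> z)" "Xb (\<phi> z)"] DX[of "\<phi> z"] z W st by auto
    then show ?thesis unfolding partial1_def st by (simp add: vector_derivative_at o_def)
  qed
  have P2: "partial2 (X \<circ> \<phi>) z = fst (partial2 \<phi> z) *\<^sub>R Xa (\<phi> z) + snd (partial2 \<phi> z) *\<^sub>R Xb (\<phi> z)" if z: "z \<in> W" for z
  proof -
    obtain s t where st: "z = (s,t)" by fastforce
    have "((\<lambda>t'. X (\<phi> (s,t'))) has_vector_derivative fst (partial2 \<phi> z) *\<^sub>R Xa (\<phi> z) + snd (partial2 \<phi> z) *\<^sub>R Xb (\<phi> z)) (at t)"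
      using chain_pair[OF smooth_slice2[OF sm ip0, of s t], of X "Xa (\<phi> z)" "Xb (\<phi> z)"] DX[of "\<phi> z"] z W st by auto
    then show ?thesis unfolding partial2_def st by (simp add: vector_derivative_at o_def)
  qed
  show "partial1 (X \<circ> \<phi>) u = a1 *\<^sub>R Xa (\<phi> u) + b1 *\<^sub>R Xb (\<phi> u)" using P1[OF u] by (simp add: a1_def b1_def)
  show "partial2 (X \<circ> \<phi>) u = a2 *\<^sub>R Xa (\<phi> u) + b2 *\<^sub>R Xb (\<phi> u)" using P2[OF u] by (simp add: a2_def b2_def)
  obtain s t where st: "u = (s,t)" by fastforce
  have DXau: "(Xa has_derivative (\<lambda>h. fst h *\<^sub>R Xaa (\<phi> u) + snd h *\<^sub>R Xab (\<phi> u))) (at (\<phi> u))"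
    and DXbu: "(Xb has_derivative (\<lambda>h. fst h *\<^sub>R Xba (\<phi> u) + snd h *\<^sub>R Xbb (\<phi> u))) (at (\<phi> u))"
    using DXa[of "\<phi> u"] DXb[of "\<phi> u"] u W by auto
  have "partial1 (partial1 (X \<circ> \<phi>)) u = partial1 (\<lambda>z. fst (partial1 \<phi> z) *\<^sub>R Xa (\<phi> z) + snd (partial1 \<phi> z) *\<^sub>R Xb (\<phi> z)) u"
    by (rule partial1_cong[OF W(1) P1 u])
  also have "\<dots> = fst (partial1 (partial1 \<phi>) u) *\<^sub>R Xa (\<phi> u) + snd (partial1 (partial1 \<phi>) u) *\<^sub>R Xb (\<phi> u)
        + a1 *\<^sub>R (a1 *\<^sub>R Xaa (\<phi> u) + b1 *\<^sub>R Xab (\<phi> u)) + b1 *\<^sub>R (a1 *\<^sub>R Xba (\<phi> u) + b1 *\<^sub>R Xbb (\<phi> u))"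
    using chain_coef[OF smooth_slice1[OF sm ip0, of s t] smooth_slice1[OF sm ip1, of s t], of Xa "Xaa (\<phi> u)" "Xab (\<phi> u)" Xb "Xba (\<phi> u)" "Xbb (\<phi> u)"]
      DXau DXbu u st unfolding partial1_def[of "\<lambda>z. _ z"] a1_def b1_def
    by (simp add: vector_derivative_at)
  finally show "partial1 (partial1 (X \<circ> \<phi>)) u = fst (partial1 (partial1 \<phi>) u) *\<^sub>R Xa (\<phi> u) + snd (partial1 (partial1 \<phi>) u) *\<^sub>R Xb (\<phi> u)
        + a1 *\<^sub>R (a1 *\<^sub>R Xaa (\<phi> u) + b1 *\<^sub>R Xab (\<phi> u)) + b1 *\<^sub>R (a1 *\<^sub>R Xba (\<phi> u) + b1 *\<^sub>R Xbb (\<phi> u))" .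
  have "partial2 (partial1 (X \<circ> \<phi>)) u = partial2 (\<lambda>z. fst (partial1 \<phi> z) *\<^sub>R Xa (\<phi> z) + snd (partial1 \<phi> z) *\<^sub>R Xb (\<phi> z)) u"
    by (rule partial2_cong[OF W(1) P1 u])
  also have "\<dots> = fst (partial2 (partial1 \<phi>) u) *\<^sub>R Xa (\<phi> u) + snd (partial2 (partial1 \<phi>) u) *\<^sub>R Xb (\<phi> u)
        + a1 *\<^sub>R (a2 *\<^sub>R Xaa (\<phi> u) + b2 *\<^sub>R Xab (\<phi> u)) + b1 *\<^sub>R (a2 *\<^sub>R Xba (\<phi> u) + b2 *\<^sub>R Xbb (\<phi> u))"
    using chain_coef[OF smooth_slice2[OF sm ip0, of s t] smooth_slice2[OF sm ip1, of s t], of Xa "Xaa (\<phi> u)" "Xab (\<phi> u)" Xb "Xba (\<phi> u)" "Xbb (\<phi> u)"]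
      DXau DXbu u st unfolding partial2_def[of "\<lambda>z. _ z"] a1_def b1_def a2_def b2_def
    by (simp add: vector_derivative_at)
  finally show "partial2 (partial1 (X \<circ> \<phi>)) u = fst (partial2 (partial1 \<phi>) u) *\<^sub>R Xa (\<phi> u) + snd (partial2 (partial1 \<phi>) u) *\<^sub>R Xb (\<phi> u)
        + a1 *\<^sub>R (a2 *\<^sub>R Xaa (\<phi> u) + b2 *\<^sub>R Xab (\<phi> u)) + b1 *\<^sub>R (a2 *\<^sub>R Xba (\<phi> u) + b2 *\<^sub>R Xbb (\<phi> u))" .
  have "partial2 (partial2 (X \<circ> \<phi>)) u = partial2 (\<lambda>z. fst (partial2 \<phi> z) *\<^sub>R Xa (\<phi> z) + snd (partial2 \<phi> z) *\<^sub>R Xb (\<phi> z)) u"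
    by (rule partial2_cong[OF W(1) P2 u])
  also have "\<dots> = fst (partial2 (partial2 \<phi>) u) *\<^sub>R Xa (\<phi> u) + snd (partial2 (partial2 \<phi>) u) *\<^sub>R Xb (\<phi> u)
        + a2 *\<^sub>R (a2 *\<^sub>R Xaa (\<phi> u) + b2 *\<^sub>R Xab (\<phi> u)) + b2 *\<^sub>R (a2 *\<^sub>R Xba (\<phi> u) + b2 *\<^sub>R Xbb (\<phi> u))"
    using chain_coef[OF smooth_slice2[OF sm ip0, of s t] smooth_slice2[OF sm ip2, of s t], of Xa "Xaa (\<phi> u)" "Xab (\<phi> u)" Xb "Xba (\<phi> u)" "Xbb (\<phi> u)"]
      DXau DXbu u st unfolding partial2_def[of "\<lambda>z. _ z"] a2_def b2_def
    by (simp add: vector_derivative_at)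
  finally show "partial2 (partial2 (X \<circ> \<phi>)) u = fst (partial2 (partial2 \<phi>) u) *\<^sub>R Xa (\<phi> u) + snd (partial2 (partial2 \<phi>) u) *\<^sub>R Xb (\<phi> u)
        + a2 *\<^sub>R (a2 *\<^sub>R Xaa (\<phi> u) + b2 *\<^sub>R Xab (\<phi> u)) + b2 *\<^sub>R (a2 *\<^sub>R Xba (\<phi> u) + b2 *\<^sub>R Xbb (\<phi> u))" .
qed



definition mc :: "real^3 \<Rightarrow> real^3 \<Rightarrow> real^3 \<Rightarrow> real^3 \<Rightarrow> real^3 \<Rightarrow> real^3" where
  "mc Xs Xt Xss Xst Xtt =
     (let E = Xs \<bullet> Xs; F = Xs \<bullet> Xt; G = Xt \<bullet> Xt;
          N = (1 / norm (cross3 Xs Xt)) *\<^sub>R cross3 Xs Xt;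
          L = Xss \<bullet> N; M = Xst \<bullet> N; NN = Xtt \<bullet> N
      in ((E * NN - 2 * F * M + G * L) / (2 * (E * G - F\<^sup>2))) *\<^sub>R N)"

lemma mean_curv_vec_mc: "mean_curv_vec X u = mc (partial1 X u) (partial2 X u) (partial1 (partial1 X) u) (partial2 (partial1 X) u) (partial2 (partial2 X) u)"
  unfolding mean_curv_vec_def mc_def Let_def ..

lemma mc_norm:
  "norm (mc A B Xss Xst Xtt) = \<bar>(A \<bullet> A) * (Xtt \<bullet> cross3 A B) - 2 * (A \<bullet> B) * (Xst \<bullet> cross3 A B) + (B \<bullet> B) * (Xss \<bullet> cross3 A B)\<bar>
      / (2 * \<bar>(A \<bullet> A) * (B \<bullet> B) - (A \<bullet> B)^2\<bar> * norm (cross3 A B))"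
proof (cases "cross3 A B = 0")
  case True then show ?thesis by (simp add: mc_def Let_def)
next
  case False
  define c where "c = cross3 A B"
  have nc: "norm c > 0" using False c_def by simp
  define Q where "Q = (A \<bullet> A) * (Xtt \<bullet> c) - 2 * (A \<bullet> B) * (Xst \<bullet> c) + (B \<bullet> B) * (Xss \<bullet> c)"
  define dd where "dd = (A \<bullet> A) * (B \<bullet> B) - (A \<bullet> B)^2"
  have "mc A B Xss Xst Xtt = (Q / norm c / (2 * dd)) *\<^sub>R ((1 / norm c) *\<^sub>R c)"
    unfolding mc_def Let_def c_def[symmetric] Q_def dd_def
    by (simp add: inner_scaleR_right algebra_simps add_divide_distrib diff_divide_distrib)
  also have "norm \<dots> = \<bar>Q\<bar> / (2 * \<bar>dd\<bar> * norm c)"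
    using nc by (simp add: abs_divide abs_mult field_simps)
  finally show ?thesis unfolding Q_def dd_def c_def .
qed

lemma cross_comb: "cross3 (a1 *\<^sub>R A + b1 *\<^sub>R B) (a2 *\<^sub>R A + b2 *\<^sub>R B) = (a1 * b2 - b1 * a2) *\<^sub>R cross3 A B"
  by (simp add: cross_add_left cross_add_right cross_mult_left cross_mult_right algebra_simps cross_skew[of B A])

lemma poly_inv:
  fixes a1 b1 a2 b2 E F G l m n :: real
  shows "(a1^2*E + 2*a1*b1*F + b1^2*G) * (a2^2*l + 2*a2*b2*m + b2^2*n)
       - 2*(a1*a2*E + (a1*b2+b1*a2)*F + b1*b2*G) * (a1*a2*l + (a1*b2+b1*a2)*m + b1*b2*n)
       + (a2^2*E + 2*a2*b2*F + b2^2*G) * (a1^2*l + 2*a1*b1*m + b1^2*n)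
     = (a1*b2 - b1*a2)^2 * (E*n - 2*F*m + G*l)"
  by (simp add: algebra_simps power2_eq_square)

lemma poly_inv2:
  fixes a1 b1 a2 b2 E F G :: real
  shows "(a1^2*E + 2*a1*b1*F + b1^2*G) * (a2^2*E + 2*a2*b2*F + b2^2*G) - (a1*a2*E + (a1*b2+b1*a2)*F + b1*b2*G)^2
     = (a1*b2 - b1*a2)^2 * (E*G - F^2)"
  by (simp add: algebra_simps power2_eq_square)

lemma mc_invariant:
  fixes A B Aa Ab Ba Bb :: "real^3"
  assumes sym: "Ab \<bullet> cross3 A B = Ba \<bullet> cross3 A B" and d: "a1 * b2 - b1 * a2 \<noteq> 0"
  shows "norm (mc (a1 *\<^sub>R A + b1 *\<^sub>R B) (a2 *\<^sub>R A + b2 *\<^sub>R B)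
      (p1 *\<^sub>R A + q1 *\<^sub>R B + a1 *\<^sub>R (a1 *\<^sub>R Aa + b1 *\<^sub>R Ab) + b1 *\<^sub>R (a1 *\<^sub>R Ba + b1 *\<^sub>R Bb))
      (p2 *\<^sub>R A + q2 *\<^sub>R B + a1 *\<^sub>R (a2 *\<^sub>R Aa + b2 *\<^sub>R Ab) + b1 *\<^sub>R (a2 *\<^sub>R Ba + b2 *\<^sub>R Bb))
      (p3 *\<^sub>R A + q3 *\<^sub>R B + a2 *\<^sub>R (a2 *\<^sub>R Aa + b2 *\<^sub>R Ab) + b2 *\<^sub>R (a2 *\<^sub>R Ba + b2 *\<^sub>R Bb)))
    = norm (mc A B Aa Ab Bb)"
proof -
  define c where "c = cross3 A B"
  define dt where "dt = a1 * b2 - b1 * a2"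
  define E where "E = A \<bullet> A" define F where "F = A \<bullet> B" define G where "G = B \<bullet> B"
  define l where "l = Aa \<bullet> c" define m where "m = Ab \<bullet> c" define n where "n = Bb \<bullet> c"
  have Ac: "A \<bullet> c = 0" "B \<bullet> c = 0" unfolding c_def by (simp_all add: dot_cross_self)
  have Bac: "Ba \<bullet> c = m" using sym unfolding m_def c_def by simp
  have cc: "cross3 (a1 *\<^sub>R A + b1 *\<^sub>R B) (a2 *\<^sub>R A + b2 *\<^sub>R B) = dt *\<^sub>R c"
    unfolding c_def dt_def by (rule cross_comb)
  have BA: "B \<bullet> A = F" unfolding F_def by (simp add: inner_commute)
  have LHS: "norm (mc (a1 *\<^sub>R A + b1 *\<^sub>R B) (a2 *\<^sub>R A + b2 *\<^sub>R B)
      (p1 *\<^sub>R A + q1 *\<^sub>R B + a1 *\<^sub>R (a1 *\<^sub>R Aa + b1 *\<^sub>R Ab) + b1 *\<^sub>R (a1 *\<^sub>R Ba + b1 *\<^sub>R Bb))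
      (p2 *\<^sub>R A + q2 *\<^sub>R B + a1 *\<^sub>R (a2 *\<^sub>R Aa + b2 *\<^sub>R Ab) + b1 *\<^sub>R (a2 *\<^sub>R Ba + b2 *\<^sub>R Bb))
      (p3 *\<^sub>R A + q3 *\<^sub>R B + a2 *\<^sub>R (a2 *\<^sub>R Aa + b2 *\<^sub>R Ab) + b2 *\<^sub>R (a2 *\<^sub>R Ba + b2 *\<^sub>R Bb)))
    = \<bar>(a1^2*E + 2*a1*b1*F + b1^2*G) * (dt * (a2^2*l + 2*a2*b2*m + b2^2*n))
       - 2*(a1*a2*E + (a1*b2+b1*a2)*F + b1*b2*G) * (dt * (a1*a2*l + (a1*b2+b1*a2)*m + b1*b2*n))
       + (a2^2*E + 2*a2*b2*F + b2^2*G) * (dt * (a1^2*l + 2*a1*b1*m + b1^2*n))\<bar>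
      / (2 * \<bar>(a1^2*E + 2*a1*b1*F + b1^2*G) * (a2^2*E + 2*a2*b2*F + b2^2*G) - (a1*a2*E + (a1*b2+b1*a2)*F + b1*b2*G)^2\<bar>
         * (\<bar>dt\<bar> * norm c))"
    unfolding mc_norm cc
    by (simp add: inner_add_left inner_add_right inner_scaleR_left inner_scaleR_right Ac Bac BA
        E_def[symmetric] F_def[symmetric] G_def[symmetric] l_def[symmetric] m_def[symmetric] n_def[symmetric]
        algebra_simps power2_eq_square)
  have RHS: "norm (mc A B Aa Ab Bb) = \<bar>E * n - 2 * F * m + G * l\<bar> / (2 * \<bar>E * G - F^2\<bar> * norm c)"
    unfolding mc_norm E_def F_def G_def l_def m_def n_def c_def ..
  have dt0: "dt \<noteq> 0" using d dt_def by simp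
  have N1: "(a1^2*E + 2*a1*b1*F + b1^2*G) * (dt * (a2^2*l + 2*a2*b2*m + b2^2*n))
       - 2*(a1*a2*E + (a1*b2+b1*a2)*F + b1*b2*G) * (dt * (a1*a2*l + (a1*b2+b1*a2)*m + b1*b2*n))
       + (a2^2*E + 2*a2*b2*F + b2^2*G) * (dt * (a1^2*l + 2*a1*b1*m + b1^2*n))
     = dt * ((a1^2*E + 2*a1*b1*F + b1^2*G) * (a2^2*l + 2*a2*b2*m + b2^2*n)
       - 2*(a1*a2*E + (a1*b2+b1*a2)*F + b1*b2*G) * (a1*a2*l + (a1*b2+b1*a2)*m + b1*b2*n)
       + (a2^2*E + 2*a2*b2*F + b2^2*G) * (a1^2*l + 2*a1*b1*m + b1^2*n))"
    by (simp add: algebra_simps)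
  also have "\<dots> = dt * (dt^2 * (E*n - 2*F*m + G*l))" unfolding poly_inv dt_def ..
  also have "\<dots> = dt^3 * (E * n - 2 * F * m + G * l)" by (simp only: power3_eq_cube power2_eq_square mult.assoc)
  finally have N2: "\<bar>(a1^2*E + 2*a1*b1*F + b1^2*G) * (dt * (a2^2*l + 2*a2*b2*m + b2^2*n))
       - 2*(a1*a2*E + (a1*b2+b1*a2)*F + b1*b2*G) * (dt * (a1*a2*l + (a1*b2+b1*a2)*m + b1*b2*n))
       + (a2^2*E + 2*a2*b2*F + b2^2*G) * (dt * (a1^2*l + 2*a1*b1*m + b1^2*n))\<bar>
     = \<bar>dt\<bar>^3 * \<bar>E * n - 2 * F * m + G * l\<bar>"
    by (simp only: abs_mult power_abs)
  have D2: "\<bar>(a1^2*E + 2*a1*b1*F + b1^2*G) * (a2^2*E + 2*a2*b2*F + b2^2*G) - (a1*a2*E + (a1*b2+b1*a2)*F + b1*b2*G)^2\<bar>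
      = \<bar>dt\<bar>^2 * \<bar>E * G - F^2\<bar>"
    unfolding poly_inv2 dt_def by (simp add: abs_mult power_abs)
  have dt0: "\<bar>dt\<bar> > 0" using d dt_def by simp
  show ?thesis unfolding LHS RHS N2 D2
    using dt0 by (simp add: power3_eq_cube power2_eq_square field_simps)
qed



lemma cross_bac_cab: "cross3 a (cross3 b c) = (a \<bullet> c) *\<^sub>R b - (a \<bullet> b) *\<^sub>R c"
  by (simp add: cross3_simps forall_3)

lemma cramer3: "(a \<bullet> cross3 b c) *\<^sub>R r = (r \<bullet> cross3 b c) *\<^sub>R a + (r \<bullet> cross3 c a) *\<^sub>R b + (r \<bullet> cross3 a b) *\<^sub>R c"
  by (simp add: cross3_simps forall_3)


lemma norm1_cross:
  assumes "v \<bullet> v = 1" "w \<bullet> w = 1" "v \<bullet> w = 0"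
  shows "cross3 v w \<bullet> cross3 v w = 1"
proof -
  have "(norm (cross3 v w))^2 + (v \<bullet> w)^2 = (norm v * norm w)^2" by (rule norm_cross_dot)
  moreover have "norm v = 1" "norm w = 1" using assms by (simp_all add: norm_eq_sqrt_inner)
  ultimately show ?thesis using assms by (simp add: power2_norm_eq_inner)
qed

lemma frame_decomp:
  assumes v: "v \<bullet> v = 1" and n: "n \<bullet> n = 1" and vn: "v \<bullet> n = 0" and z: "z \<bullet> n = 0"
  shows "z = (z \<bullet> v) *\<^sub>R v + (z \<bullet> cross3 n v) *\<^sub>R cross3 n v"
proof -
  define w where "w = cross3 n v"
  have ww: "w \<bullet> w = 1" unfolding w_def by (rule norm1_cross) (use v n vn in \<open>simp_all add: inner_commute\<close>)
  have wv: "w \<bullet> v = 0" "w \<bullet> n = 0" unfolding w_def by (simp_all add: dot_cross_self)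
  define r where "r = z - (z \<bullet> v) *\<^sub>R v - (z \<bullet> w) *\<^sub>R w"
  have rv: "r \<bullet> v = 0" "r \<bullet> n = 0" "r \<bullet> w = 0"
    unfolding r_def using v wv ww vn z by (simp_all add: inner_diff_left inner_diff_right inner_commute)
  have nw: "cross3 n w = - v" unfolding w_def cross_bac_cab using n vn by (simp add: inner_commute)
  have wv2: "cross3 w v = - n" unfolding w_def cross_skew[of "cross3 n v" v] cross_bac_cab using v vn by simp
  have vn2: "cross3 v n = - w" unfolding w_def by (rule cross_skew)
  have "(v \<bullet> cross3 n w) *\<^sub>R r = (r \<bullet> cross3 n w) *\<^sub>R v + (r \<bullet> cross3 w v) *\<^sub>R n + (r \<bullet> cross3 v n) *\<^sub>R w"
    by (rule cramer3)
  also have "\<dots> = 0" unfolding nw wv2 vn2 using rv by simp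
  finally have "(v \<bullet> cross3 n w) *\<^sub>R r = 0" .
  then have "r = 0" unfolding nw using v by simp
  then show ?thesis unfolding r_def w_def by (simp add: algebra_simps)
qed

lemma frame_cross:
  assumes v: "v \<bullet> v = 1" and w: "w \<bullet> w = 1" and vw: "v \<bullet> w = 0"
  shows "cross3 v w \<bullet> cross3 v w = 1" "cross3 v w \<bullet> v = 0" "cross3 v w \<bullet> w = 0"
    "cross3 w (cross3 v w) = v" "cross3 (cross3 v w) v = w"
    "cross3 w v = - cross3 v w" "cross3 (cross3 v w) w = - v" "cross3 v (cross3 v w) = - w"
    "v \<bullet> cross3 v w = 0" "w \<bullet> cross3 v w = 0" "w \<bullet> v = 0"
proof -
  show "cross3 v w \<bullet> cross3 v w = 1" by (rule norm1_cross[OF v w vw])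
  show "cross3 v w \<bullet> v = 0" "cross3 v w \<bullet> w = 0" "v \<bullet> cross3 v w = 0" "w \<bullet> cross3 v w = 0" by (simp_all add: dot_cross_self)
  show "cross3 w (cross3 v w) = v" unfolding cross_bac_cab using w vw by (simp add: inner_commute)
  show "cross3 (cross3 v w) v = w" unfolding cross_skew[of "cross3 v w" v] cross_bac_cab using v vw by simp
  show "cross3 w v = - cross3 v w" by (rule cross_skew)
  show "cross3 (cross3 v w) w = - v" unfolding cross_skew[of "cross3 v w" w] cross_bac_cab using w vw by (simp add: inner_commute)
  show "cross3 v (cross3 v w) = - w" unfolding cross_bac_cab using v vw by simp
  show "w \<bullet> v = 0" using vw by (simp add: inner_commute)
qed

definition Lr :: "real^3 \<Rightarrow> real \<Rightarrow> real \<Rightarrow> real \<Rightarrow> real^3 \<Rightarrow> real^3" where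
  "Lr v k0 c1 c2 z = (k0 * (z \<bullet> v)) *\<^sub>R v + c1 *\<^sub>R (z - (z \<bullet> v) *\<^sub>R v) + c2 *\<^sub>R cross3 v z"

lemma rot_Lr: "rot_about a v \<theta> x = a + Lr v 1 (cos \<theta>) (sin \<theta>) (x - a)"
  unfolding rot_about_def Lr_def by simp

lemma bl_cross: "bounded_linear (cross3 v)"
proof -
  have "linear (cross3 v)" using bilinear_cross unfolding bilinear_def by auto
  then show ?thesis by (simp add: linear_conv_bounded_linear)
qed

lemma Lr_deriv:
  assumes f: "(f has_vector_derivative f') (at t0)"
    and c1: "(c1 has_real_derivative c1') (at \<theta>0)" and c2: "(c2 has_real_derivative c2') (at \<theta>0)"
  shows "((\<lambda>p. Lr v k0 (c1 (snd p)) (c2 (snd p)) (f (fst p))) has_derivative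
      (\<lambda>h. fst h *\<^sub>R Lr v k0 (c1 \<theta>0) (c2 \<theta>0) f' + snd h *\<^sub>R Lr v 0 c1' c2' (f t0))) (at (t0, \<theta>0))"
proof -
  have F: "((\<lambda>p. f (fst p)) has_derivative (\<lambda>h. fst h *\<^sub>R f')) (at (t0, \<theta>0))"
    using has_derivative_compose[OF has_derivative_fst[OF has_derivative_ident], of f "\<lambda>x. x *\<^sub>R f'" "(t0,\<theta>0)" UNIV] f
    by (simp add: has_vector_derivative_def)
  have C1: "((\<lambda>p. c1 (snd p)) has_derivative (\<lambda>h. c1' * snd h)) (at (t0, \<theta>0))"
    using has_derivative_compose[OF has_derivative_snd[OF has_derivative_ident], of c1 "\<lambda>x. c1' * x" "(t0,\<theta>0)" UNIV] c1
    by (simp add: has_field_derivative_def)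
  have C2: "((\<lambda>p. c2 (snd p)) has_derivative (\<lambda>h. c2' * snd h)) (at (t0, \<theta>0))"
    using has_derivative_compose[OF has_derivative_snd[OF has_derivative_ident], of c2 "\<lambda>x. c2' * x" "(t0,\<theta>0)" UNIV] c2
    by (simp add: has_field_derivative_def)
  have X: "((\<lambda>p. cross3 v (f (fst p))) has_derivative (\<lambda>h. cross3 v (fst h *\<^sub>R f'))) (at (t0, \<theta>0))"
    by (rule bounded_linear.has_derivative[OF bl_cross F])
  show ?thesis unfolding Lr_def
    apply (rule has_derivative_eq_rhs)
     apply (rule derivative_eq_intros F C1 C2 X refl | simp)+
    apply (simp add: fun_eq_iff algebra_simps cross_mult_right inner_diff_left)
    done
qed



lemma Lr_frame:
  assumes v: "v \<bullet> v = 1" and vw: "v \<bullet> w = 0"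
  shows "Lr v k0 c1 c2 (al *\<^sub>R v + be *\<^sub>R w) = (k0 * al) *\<^sub>R v + (c1 * be) *\<^sub>R w + (c2 * be) *\<^sub>R cross3 v w"
  unfolding Lr_def using v vw
  by (simp add: inner_add_left inner_commute cross_add_right cross_mult_right algebra_simps)

lemma frame_coords:
  assumes v: "v \<bullet> v = 1" and w: "w \<bullet> w = 1" and vw: "v \<bullet> w = 0" and u: "u = cross3 v w"
  shows "(a *\<^sub>R v + b *\<^sub>R w + c *\<^sub>R u) \<bullet> (a' *\<^sub>R v + b' *\<^sub>R w + c' *\<^sub>R u) = a * a' + b * b' + c * c'"
    and "cross3 (a *\<^sub>R v + b *\<^sub>R w + c *\<^sub>R u) (a' *\<^sub>R v + b' *\<^sub>R w + c' *\<^sub>R u)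
       = (b * c' - c * b') *\<^sub>R v + (c * a' - a * c') *\<^sub>R w + (a * b' - b * a') *\<^sub>R u"
proof -
  note fc = frame_cross[OF v w vw, folded u]
  show "(a *\<^sub>R v + b *\<^sub>R w + c *\<^sub>R u) \<bullet> (a' *\<^sub>R v + b' *\<^sub>R w + c' *\<^sub>R u) = a * a' + b * b' + c * c'"
    using v w vw fc by (simp add: inner_add_left inner_add_right inner_commute)
  show "cross3 (a *\<^sub>R v + b *\<^sub>R w + c *\<^sub>R u) (a' *\<^sub>R v + b' *\<^sub>R w + c' *\<^sub>R u)
       = (b * c' - c * b') *\<^sub>R v + (c * a' - a * c') *\<^sub>R w + (a * b' - b * a') *\<^sub>R u"
    using fc u by (simp add: cross_add_left cross_add_right cross_mult_left cross_mult_right cross_skew[of u v]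
        cross_skew[of u w] algebra_simps)
qed

lemma rev_mc:
  assumes v: "v \<bullet> v = 1" and w: "w \<bullet> w = 1" and vw: "v \<bullet> w = 0"
    and y: "y > 0" and sp: "x1^2 + y1^2 > 0"
  shows "norm (mc (Lr v 1 (cos th) (sin th) (x1 *\<^sub>R v + y1 *\<^sub>R w)) (Lr v 0 (- sin th) (cos th) (x *\<^sub>R v + y *\<^sub>R w))
      (Lr v 1 (cos th) (sin th) (x2 *\<^sub>R v + y2 *\<^sub>R w)) (Lr v 0 (- sin th) (cos th) (x1 *\<^sub>R v + y1 *\<^sub>R w))
      (Lr v 0 (- cos th) (- sin th) (x *\<^sub>R v + y *\<^sub>R w)))
    = \<bar>x1/(sqrt(x1^2+y1^2) * y) - (x1 * y2 - x2 * y1)/sqrt(x1^2+y1^2)^3\<bar> / 2"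
proof -
  define u where "u = cross3 v w"
  define co where "co = cos th" define si where "si = sin th"
  have cs: "co * co + si * si = 1" unfolding co_def si_def by (simp add: sin_cos_squared_add3)
  note LF = Lr_frame[OF v vw, folded u_def]
  note FC = frame_coords[OF v w vw u_def]
  have e: "\<And>a b c. a *\<^sub>R v + b *\<^sub>R w + c *\<^sub>R u = a *\<^sub>R v + b *\<^sub>R w + c *\<^sub>R u" by simp
  define S where "S = x1^2 + y1^2"
  define sg where "sg = sqrt S"
  have sg: "sg > 0" "sg^2 = S" using sp unfolding sg_def S_def by simp_all
  have A: "Lr v 1 co si (x1 *\<^sub>R v + y1 *\<^sub>R w) = x1 *\<^sub>R v + (co * y1) *\<^sub>R w + (si * y1) *\<^sub>R u" unfolding LF by simp
  have B: "Lr v 0 (- si) co (x *\<^sub>R v + y *\<^sub>R w) = 0 *\<^sub>R v + (- si * y) *\<^sub>R w + (co * y) *\<^sub>R u" unfolding LF by simp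
  have Aa: "Lr v 1 co si (x2 *\<^sub>R v + y2 *\<^sub>R w) = x2 *\<^sub>R v + (co * y2) *\<^sub>R w + (si * y2) *\<^sub>R u" unfolding LF by simp
  have Ab: "Lr v 0 (- si) co (x1 *\<^sub>R v + y1 *\<^sub>R w) = 0 *\<^sub>R v + (- si * y1) *\<^sub>R w + (co * y1) *\<^sub>R u" unfolding LF by simp
  have Bb: "Lr v 0 (- co) (- si) (x *\<^sub>R v + y *\<^sub>R w) = 0 *\<^sub>R v + (- co * y) *\<^sub>R w + (- si * y) *\<^sub>R u" unfolding LF by simp
  have C: "cross3 (x1 *\<^sub>R v + (co * y1) *\<^sub>R w + (si * y1) *\<^sub>R u) (0 *\<^sub>R v + (- si * y) *\<^sub>R w + (co * y) *\<^sub>R u)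
     = (y1 * y) *\<^sub>R v + (- x1 * y * co) *\<^sub>R w + (- x1 * y * si) *\<^sub>R u"
    unfolding FC
  proof -
    have "co * y1 * (co * y) - si * y1 * (- si * y) = y1 * y" using cs by algebra
    then show "(co * y1 * (co * y) - si * y1 * (- si * y)) *\<^sub>R v + (si * y1 * 0 - x1 * (co * y)) *\<^sub>R w + (x1 * (- si * y) - co * y1 * 0) *\<^sub>R u
      = (y1 * y) *\<^sub>R v + (- x1 * y * co) *\<^sub>R w + (- x1 * y * si) *\<^sub>R u" by (simp add: algebra_simps)
  qed
  have E: "(x1 *\<^sub>R v + (co * y1) *\<^sub>R w + (si * y1) *\<^sub>R u) \<bullet> (x1 *\<^sub>R v + (co * y1) *\<^sub>R w + (si * y1) *\<^sub>R u) = S"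
    unfolding FC S_def using cs by (simp add: power2_eq_square) algebra
  have F: "(x1 *\<^sub>R v + (co * y1) *\<^sub>R w + (si * y1) *\<^sub>R u) \<bullet> (0 *\<^sub>R v + (- si * y) *\<^sub>R w + (co * y) *\<^sub>R u) = 0"
    unfolding FC by (simp add: algebra_simps)
  have G: "(0 *\<^sub>R v + (- si * y) *\<^sub>R w + (co * y) *\<^sub>R u) \<bullet> (0 *\<^sub>R v + (- si * y) *\<^sub>R w + (co * y) *\<^sub>R u) = y^2"
    unfolding FC using cs by (simp add: power2_eq_square) algebra
  have L: "(x2 *\<^sub>R v + (co * y2) *\<^sub>R w + (si * y2) *\<^sub>R u) \<bullet> ((y1 * y) *\<^sub>R v + (- x1 * y * co) *\<^sub>R w + (- x1 * y * si) *\<^sub>R u)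
     = y * (x2 * y1 - x1 * y2)"
    unfolding FC using cs by algebra
  have M: "(0 *\<^sub>R v + (- si * y1) *\<^sub>R w + (co * y1) *\<^sub>R u) \<bullet> ((y1 * y) *\<^sub>R v + (- x1 * y * co) *\<^sub>R w + (- x1 * y * si) *\<^sub>R u) = 0"
    unfolding FC by (simp add: algebra_simps)
  have NN: "(0 *\<^sub>R v + (- co * y) *\<^sub>R w + (- si * y) *\<^sub>R u) \<bullet> ((y1 * y) *\<^sub>R v + (- x1 * y * co) *\<^sub>R w + (- x1 * y * si) *\<^sub>R u)
     = x1 * y^2"
    unfolding FC using cs by (simp add: power2_eq_square) algebra
  have NC: "norm ((y1 * y) *\<^sub>R v + (- x1 * y * co) *\<^sub>R w + (- x1 * y * si) *\<^sub>R u) = y * sg"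
  proof -
    have "((y1 * y) *\<^sub>R v + (- x1 * y * co) *\<^sub>R w + (- x1 * y * si) *\<^sub>R u) \<bullet> ((y1 * y) *\<^sub>R v + (- x1 * y * co) *\<^sub>R w + (- x1 * y * si) *\<^sub>R u)
      = (y * sg)^2" unfolding FC using cs sg(2) unfolding S_def by (simp add: power2_eq_square) algebra
    then show ?thesis using y sg by (simp add: norm_eq_sqrt_inner)
  qed
  have "norm (mc (Lr v 1 (cos th) (sin th) (x1 *\<^sub>R v + y1 *\<^sub>R w)) (Lr v 0 (- sin th) (cos th) (x *\<^sub>R v + y *\<^sub>R w))
      (Lr v 1 (cos th) (sin th) (x2 *\<^sub>R v + y2 *\<^sub>R w)) (Lr v 0 (- sin th) (cos th) (x1 *\<^sub>R v + y1 *\<^sub>R w))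
      (Lr v 0 (- cos th) (- sin th) (x *\<^sub>R v + y *\<^sub>R w)))
     = \<bar>S * (x1 * y^2) - 2 * 0 * 0 + y^2 * (y * (x2 * y1 - x1 * y2))\<bar> / (2 * \<bar>S * y^2 - 0^2\<bar> * (y * sg))"
    unfolding co_def[symmetric] si_def[symmetric] A B Aa Ab Bb mc_norm C E F G L M NN NC ..
  also have "\<dots> = \<bar>x1/(sg * y) - (x1 * y2 - x2 * y1)/sg^3\<bar> / 2"
  proof -
    have "S * (x1 * y^2) - 2 * 0 * 0 + y^2 * (y * (x2 * y1 - x1 * y2)) = y^2 * (sg^3 * y) * (x1/(sg * y) - (x1 * y2 - x2 * y1)/sg^3)"
    proof -
      have "y^2 * (sg^3 * y) * (x1/(sg * y) - (x1 * y2 - x2 * y1)/sg^3) = y^2 * sg^2 * x1 - y^3 * (x1 * y2 - x2 * y1)"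
        using sg(1) y by (simp add: field_simps power3_eq_cube power2_eq_square)
      then show ?thesis unfolding sg(2) by (simp add: power2_eq_square power3_eq_cube algebra_simps)
    qed
    moreover have "2 * \<bar>S * y^2 - 0^2\<bar> * (y * sg) = 2 * (y^2 * (sg^3 * y))"
      using sg y by (simp add: sg(2)[symmetric] power2_eq_square power3_eq_cube algebra_simps)
    ultimately show ?thesis using sg y by (simp add: abs_mult)
  qed
  finally show ?thesis unfolding sg_def S_def .
qed




lemma per_nat:
  assumes per: "\<And>t \<theta>. p (t, \<theta> + 2 * pi) = p (t, \<theta>)"
  shows "p (t, \<theta> + 2 * pi * real k) = p (t, \<theta>)"
proof (induction k)
  case 0 then show ?case by simp
next
  case (Suc k)
  have "p (t, \<theta> + 2 * pi * real (Suc k)) = p (t, (\<theta> + 2 * pi * real k) + 2 * pi)" by (simp add: algebra_simps)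
  also have "\<dots> = p (t, \<theta> + 2 * pi * real k)" by (rule per)
  finally show ?case using Suc by simp
qed

lemma per_int:
  assumes per: "\<And>t \<theta>. p (t, \<theta> + 2 * pi) = p (t, \<theta>)"
  shows "p (t, \<theta> + 2 * pi * of_int k) = p (t, \<theta>)"
proof (cases "k \<ge> 0")
  case True
  then obtain m where "k = int m" by (metis nonneg_eq_int)
  then show ?thesis using per_nat[OF per, of t \<theta> m] by simp
next
  case False
  then obtain m where m: "k = - int m" by (metis nonneg_eq_int neg_0_le_iff_le linorder_not_le order_less_imp_le minus_minus)
  have "p (t, \<theta>) = p (t, (\<theta> - 2 * pi * real m) + 2 * pi * real m)" by simp
  also have "\<dots> = p (t, \<theta> - 2 * pi * real m)" by (rule per_nat[OF per])
  finally show ?thesis using m by simp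
qed

lemma inj_ball:
  assumes per: "\<And>t \<theta>. p (t, \<theta> + 2 * pi) = p (t, \<theta>)"
    and inj: "inj_on p {z. fst z \<ge> 0 \<and> 0 \<le> snd z \<and> snd z < 2 * pi}"
    and t0: "t0 > 0"
  shows "inj_on p (ball (t0, \<theta>0) (min t0 pi))"
proof (rule inj_onI)
  fix z1 z2 assume z1: "z1 \<in> ball (t0, \<theta>0) (min t0 pi)" and z2: "z2 \<in> ball (t0, \<theta>0) (min t0 pi)"
    and eq: "p z1 = p z2"
  obtain t1 th1 where zz1: "z1 = (t1, th1)" by fastforce
  obtain t2 th2 where zz2: "z2 = (t2, th2)" by fastforce
  have d1: "dist t0 t1 < t0" "dist \<theta>0 th1 < pi" "dist t0 t2 < t0" "dist \<theta>0 th2 < pi"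
    using z1 z2 zz1 zz2 by (auto simp: dist_Pair_Pair intro: le_less_trans[OF real_sqrt_sum_squares_ge1]
        le_less_trans[OF real_sqrt_sum_squares_ge2])
  have tp: "t1 > 0" "t2 > 0" using d1 by (auto simp: dist_real_def)
  define k1 where "k1 = \<lfloor>th1 / (2 * pi)\<rfloor>"
  define k2 where "k2 = \<lfloor>th2 / (2 * pi)\<rfloor>"
  define r1 where "r1 = th1 - 2 * pi * of_int k1"
  define r2 where "r2 = th2 - 2 * pi * of_int k2"
  have r1b: "0 \<le> r1" "r1 < 2 * pi"
  proof -
    have "of_int k1 \<le> th1 / (2 * pi)" "th1 / (2 * pi) < of_int k1 + 1" unfolding k1_def by linarith+
    then show "0 \<le> r1" "r1 < 2 * pi" unfolding r1_def by (simp_all add: field_simps)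
  qed
  have r2b: "0 \<le> r2" "r2 < 2 * pi"
  proof -
    have "of_int k2 \<le> th2 / (2 * pi)" "th2 / (2 * pi) < of_int k2 + 1" unfolding k2_def by linarith+
    then show "0 \<le> r2" "r2 < 2 * pi" unfolding r2_def by (simp_all add: field_simps)
  qed
  have "p (t1, r1) = p (t1, th1)" using per_int[OF per, of t1 r1 k1] unfolding r1_def by simp
  moreover have "p (t2, r2) = p (t2, th2)" using per_int[OF per, of t2 r2 k2] unfolding r2_def by simp
  ultimately have "p (t1, r1) = p (t2, r2)" using eq zz1 zz2 by simp
  then have "(t1, r1) = (t2, r2)" using inj r1b r2b tp by (auto dest: inj_onD)
  then have e: "t1 = t2" "th1 - th2 = 2 * pi * of_int (k1 - k2)" unfolding r1_def r2_def by (auto simp: algebra_simps)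
  have "\<bar>th1 - th2\<bar> < 2 * pi" using d1 by (auto simp: dist_real_def)
  then have "\<bar>of_int (k1 - k2)\<bar> < (1::real)" unfolding e(2) by (simp add: abs_mult)
  then have "k1 = k2" by linarith
  then show "z1 = z2" using e zz1 zz2 by simp
qed


lemma rev_map_Lr: "revolution_map a v \<beta> = (\<lambda>z. a + Lr v 1 (cos (snd z)) (sin (snd z)) (\<beta> (fst z) - a))"
  unfolding revolution_map_def by (auto simp: fun_eq_iff rot_Lr)

lemma transfer:
  assumes si: "surface_immersion M A F"
    and pM: "\<And>z. fst z > 0 \<Longrightarrow> p z \<in> M"
    and per: "\<And>t \<theta>. p (t, \<theta> + 2 * pi) = p (t, \<theta>)"
    and inj: "inj_on p {z. fst z \<ge> 0 \<and> 0 \<le> snd z \<and> snd z < 2 * pi}"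
    and comp: "\<forall>V. open V \<and> V \<subseteq> {z. fst z > 0} \<and> inj_on p V \<longrightarrow>
             (\<forall>P \<in> A. compatible_params (V, p) P \<and> compatible_params P (V, p))"
    and Fp: "\<And>z. fst z \<ge> 0 \<Longrightarrow> F (p z) = revolution_map a v \<beta> z"
    and d0: "\<And>t. t > 0 \<Longrightarrow> (\<beta> has_vector_derivative \<beta>1 t) (at t)"
    and d1: "\<And>t. t > 0 \<Longrightarrow> (\<beta>1 has_vector_derivative \<beta>2 t) (at t)"
    and t0: "t0 > 0"
  shows "\<exists>U q u. (U, q) \<in> A \<and> u \<in> U \<and> norm (mean_curv_vec (F \<circ> q) u) =
      norm (mc (Lr v 1 (cos th) (sin th) (\<beta>1 t0)) (Lr v 0 (- sin th) (cos th) (\<beta> t0 - a))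
        (Lr v 1 (cos th) (sin th) (\<beta>2 t0)) (Lr v 0 (- sin th) (cos th) (\<beta>1 t0)) (Lr v 0 (- cos th) (- sin th) (\<beta> t0 - a)))"
proof -
  have sa: "surface_atlas M A" using si by (simp add: surface_immersion_def)
  have imm: "immersion_on U (F \<circ> q)" if "(U,q) \<in> A" for U q
    using si that unfolding surface_immersion_def by (simp add: case_prod_beta) (metis fst_conv snd_conv)
  define z0 where "z0 = (t0, th)"
  have "p z0 \<in> M" using pM t0 z0_def by simp
  moreover have "M = (\<Union>(U,p) \<in> A. p ` U)" using sa by (simp add: surface_atlas_def)
  ultimately obtain U q u0 where Uq: "(U,q) \<in> A" "u0 \<in> U" "q u0 = p z0"
    by auto
  define V where "V = ball z0 (min t0 pi)"
  have Vo: "open V" unfolding V_def by simp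
  have Vp: "V \<subseteq> {z. fst z > 0}"
  proof
    fix z assume "z \<in> V"
    then have "dist (fst z0) (fst z) < t0" unfolding V_def
      using dist_fst_le[of z0 z] by simp
    then show "z \<in> {z. fst z > 0}" by (auto simp: z0_def dist_real_def)
  qed
  have Vi: "inj_on p V" unfolding V_def z0_def by (rule inj_ball[OF per inj t0])
  have z0V: "z0 \<in> V" unfolding V_def using t0 by simp
  have "compatible_params (U,q) (V,p)" using comp[rule_format, OF conjI[OF Vo conjI[OF Vp Vi]], OF Uq(1)] by simp
  then have W: "open {u \<in> U. q u \<in> p ` V}" "smooth2_on {u \<in> U. q u \<in> p ` V} (inv_into V p \<circ> q)"
    unfolding compatible_params_def Let_def fst_conv snd_conv by simp_all
  define W where "W = {u \<in> U. q u \<in> p ` V}"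
  define \<phi> where "\<phi> = inv_into V p \<circ> q"
  have u0W: "u0 \<in> W" unfolding W_def using Uq z0V by auto
  have phiV: "\<phi> u \<in> V" if "u \<in> W" for u using that unfolding W_def \<phi>_def by (auto intro: inv_into_into)
  have pphi: "p (\<phi> u) = q u" if "u \<in> W" for u using that unfolding W_def \<phi>_def by (auto intro: f_inv_into_f)
  have phi0: "\<phi> u0 = z0" unfolding \<phi>_def using Uq(3) Vi z0V by (simp add: inv_into_f_f)
  define X where "X = revolution_map a v \<beta>"
  have FqX: "(F \<circ> q) u = (X \<circ> \<phi>) u" if "u \<in> W" for u
  proof -
    have "fst (\<phi> u) > 0" using phiV[OF that] Vp by auto
    then show ?thesis using Fp[of "\<phi> u"] pphi[OF that] unfolding X_def by simp
  qed
  define Xa where "Xa = (\<lambda>z::real\<times>real. Lr v 1 (cos (snd z)) (sin (snd z)) (\<beta>1 (fst z)))"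
  define Xb where "Xb = (\<lambda>z::real\<times>real. Lr v 0 (- sin (snd z)) (cos (snd z)) (\<beta> (fst z) - a))"
  define Xaa where "Xaa = (\<lambda>z::real\<times>real. Lr v 1 (cos (snd z)) (sin (snd z)) (\<beta>2 (fst z)))"
  define Xab where "Xab = (\<lambda>z::real\<times>real. Lr v 0 (- sin (snd z)) (cos (snd z)) (\<beta>1 (fst z)))"
  define Xbb where "Xbb = (\<lambda>z::real\<times>real. Lr v 0 (- cos (snd z)) (- sin (snd z)) (\<beta> (fst z) - a))"
  define Om where "Om = {z::real\<times>real. fst z > 0}"
  have dsin: "\<And>x. (sin has_real_derivative cos x) (at x)" by (rule DERIV_sin)
  have dcos: "\<And>x. (cos has_real_derivative - sin x) (at x)" by (rule DERIV_cos)
  have dmsin: "\<And>x. ((\<lambda>x. - sin x) has_real_derivative - cos x) (at x)" by (auto intro!: derivative_eq_intros)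
  have dmcos: "\<And>x. ((\<lambda>x. - cos x) has_real_derivative sin x) (at x)" by (auto intro!: derivative_eq_intros)
  have dba: "\<And>t. t > 0 \<Longrightarrow> ((\<lambda>t. \<beta> t - a) has_vector_derivative \<beta>1 t) (at t)"
    using d0 by (auto intro!: derivative_eq_intros)
  have DX: "(X has_derivative (\<lambda>h. fst h *\<^sub>R Xa z + snd h *\<^sub>R Xb z)) (at z)" if "z \<in> Om" for z
  proof -
    obtain t s where z: "z = (t,s)" by fastforce
    have "t > 0" using that z Om_def by simp
    from Lr_deriv[OF dba[OF this] dcos dsin, of v 1]
    have "((\<lambda>p. Lr v 1 (cos (snd p)) (sin (snd p)) (\<beta> (fst p) - a)) has_derivative
      (\<lambda>h. fst h *\<^sub>R Xa z + snd h *\<^sub>R Xb z)) (at z)" unfolding Xa_def Xb_def z by simp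
    then show ?thesis unfolding X_def rev_map_Lr by (rule has_derivative_add[OF has_derivative_const, simplified])
  qed
  have DXa: "(Xa has_derivative (\<lambda>h. fst h *\<^sub>R Xaa z + snd h *\<^sub>R Xab z)) (at z)" if "z \<in> Om" for z
  proof -
    obtain t s where z: "z = (t,s)" by fastforce
    have "t > 0" using that z Om_def by simp
    from Lr_deriv[OF d1[OF this] dcos dsin, of v 1]
    show ?thesis unfolding Xa_def Xaa_def Xab_def z by simp
  qed
  have DXb: "(Xb has_derivative (\<lambda>h. fst h *\<^sub>R Xab z + snd h *\<^sub>R Xbb z)) (at z)" if "z \<in> Om" for z
  proof -
    obtain t s where z: "z = (t,s)" by fastforce
    have "t > 0" using that z Om_def by simp
    from Lr_deriv[OF dba[OF this] dmsin dcos, of v 0]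
    show ?thesis unfolding Xb_def Xbb_def Xab_def z by simp
  qed
  have phiOm: "\<phi> ` W \<subseteq> Om" using phiV Vp unfolding Om_def by blast
  have sm: "smooth2_on W \<phi>" using W(2) unfolding W_def \<phi>_def .
  have Wo: "open W" using W(1) unfolding W_def .
  note PC = partials_comp[of Om X Xa Xb Xaa Xab Xab Xbb W \<phi> u0, OF DX DXa DXb Wo phiOm sm u0W]
  have "partial1 (X \<circ> \<phi>) u0 = fst (partial1 \<phi> u0) *\<^sub>R Xa (\<phi> u0) + snd (partial1 \<phi> u0) *\<^sub>R Xb (\<phi> u0)"
    by (rule PC(1))
  have C1: "partial1 (F \<circ> q) z = partial1 (X \<circ> \<phi>) z" if "z \<in> W" for z by (rule partial1_cong[OF Wo FqX that])
  have C2: "partial2 (F \<circ> q) z = partial2 (X \<circ> \<phi>) z" if "z \<in> W" for z by (rule partial2_cong[OF Wo FqX that])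
  have mcv: "mean_curv_vec (F \<circ> q) u0 = mean_curv_vec (X \<circ> \<phi>) u0"
  proof -
    have q1: "partial1 (F \<circ> q) u0 = partial1 (X \<circ> \<phi>) u0" by (rule C1[OF u0W])
    have q2: "partial2 (F \<circ> q) u0 = partial2 (X \<circ> \<phi>) u0" by (rule C2[OF u0W])
    have q3: "partial1 (partial1 (F \<circ> q)) u0 = partial1 (partial1 (X \<circ> \<phi>)) u0" by (rule partial1_cong[OF Wo C1 u0W])
    have q4: "partial2 (partial1 (F \<circ> q)) u0 = partial2 (partial1 (X \<circ> \<phi>)) u0" by (rule partial2_cong[OF Wo C1 u0W])
    have q5: "partial2 (partial2 (F \<circ> q)) u0 = partial2 (partial2 (X \<circ> \<phi>)) u0" by (rule partial2_cong[OF Wo C2 u0W])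
    show ?thesis using mean_curv_vec_mc[of "F \<circ> q" u0] mean_curv_vec_mc[of "X \<circ> \<phi>" u0] q1 q2 q3 q4 q5 by metis
  qed
  define a1 where "a1 = fst (partial1 \<phi> u0)" define b1 where "b1 = snd (partial1 \<phi> u0)"
  define a2 where "a2 = fst (partial2 \<phi> u0)" define b2 where "b2 = snd (partial2 \<phi> u0)"
  have e1: "partial1 (X \<circ> \<phi>) u0 = a1 *\<^sub>R Xa (\<phi> u0) + b1 *\<^sub>R Xb (\<phi> u0)"
    unfolding a1_def b1_def by (rule PC(1))
  have e2: "partial2 (X \<circ> \<phi>) u0 = a2 *\<^sub>R Xa (\<phi> u0) + b2 *\<^sub>R Xb (\<phi> u0)"
    unfolding a2_def b2_def by (rule PC(2))
  have "cross3 (partial1 (F \<circ> q) u0) (partial2 (F \<circ> q) u0) \<noteq> 0"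
    using imm[OF Uq(1)] Uq(2) unfolding immersion_on_def by auto
  then have "cross3 (a1 *\<^sub>R Xa (\<phi> u0) + b1 *\<^sub>R Xb (\<phi> u0)) (a2 *\<^sub>R Xa (\<phi> u0) + b2 *\<^sub>R Xb (\<phi> u0)) \<noteq> 0"
    using C1[OF u0W] C2[OF u0W] e1 e2 by metis
  then have "(a1 * b2 - b1 * a2) *\<^sub>R cross3 (Xa (\<phi> u0)) (Xb (\<phi> u0)) \<noteq> 0"
    by (metis cross_comb)
  then have det: "a1 * b2 - b1 * a2 \<noteq> 0" by auto
  have e3: "partial1 (partial1 (X \<circ> \<phi>)) u0 = fst (partial1 (partial1 \<phi>) u0) *\<^sub>R Xa (\<phi> u0) + snd (partial1 (partial1 \<phi>) u0) *\<^sub>R Xb (\<phi> u0)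
        + a1 *\<^sub>R (a1 *\<^sub>R Xaa (\<phi> u0) + b1 *\<^sub>R Xab (\<phi> u0)) + b1 *\<^sub>R (a1 *\<^sub>R Xab (\<phi> u0) + b1 *\<^sub>R Xbb (\<phi> u0))"
    unfolding a1_def b1_def by (rule PC(3))
  have e4: "partial2 (partial1 (X \<circ> \<phi>)) u0 = fst (partial2 (partial1 \<phi>) u0) *\<^sub>R Xa (\<phi> u0) + snd (partial2 (partial1 \<phi>) u0) *\<^sub>R Xb (\<phi> u0)
        + a1 *\<^sub>R (a2 *\<^sub>R Xaa (\<phi> u0) + b2 *\<^sub>R Xab (\<phi> u0)) + b1 *\<^sub>R (a2 *\<^sub>R Xab (\<phi> u0) + b2 *\<^sub>R Xbb (\<phi> u0))"
    unfolding a1_def b1_def a2_def b2_def by (rule PC(4))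
  have e5: "partial2 (partial2 (X \<circ> \<phi>)) u0 = fst (partial2 (partial2 \<phi>) u0) *\<^sub>R Xa (\<phi> u0) + snd (partial2 (partial2 \<phi>) u0) *\<^sub>R Xb (\<phi> u0)
        + a2 *\<^sub>R (a2 *\<^sub>R Xaa (\<phi> u0) + b2 *\<^sub>R Xab (\<phi> u0)) + b2 *\<^sub>R (a2 *\<^sub>R Xab (\<phi> u0) + b2 *\<^sub>R Xbb (\<phi> u0))"
    unfolding a2_def b2_def by (rule PC(5))
  have "norm (mean_curv_vec (X \<circ> \<phi>) u0) = norm (mc (a1 *\<^sub>R Xa (\<phi> u0) + b1 *\<^sub>R Xb (\<phi> u0)) (a2 *\<^sub>R Xa (\<phi> u0) + b2 *\<^sub>R Xb (\<phi> u0))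
     (fst (partial1 (partial1 \<phi>) u0) *\<^sub>R Xa (\<phi> u0) + snd (partial1 (partial1 \<phi>) u0) *\<^sub>R Xb (\<phi> u0)
        + a1 *\<^sub>R (a1 *\<^sub>R Xaa (\<phi> u0) + b1 *\<^sub>R Xab (\<phi> u0)) + b1 *\<^sub>R (a1 *\<^sub>R Xab (\<phi> u0) + b1 *\<^sub>R Xbb (\<phi> u0)))
     (fst (partial2 (partial1 \<phi>) u0) *\<^sub>R Xa (\<phi> u0) + snd (partial2 (partial1 \<phi>) u0) *\<^sub>R Xb (\<phi> u0)
        + a1 *\<^sub>R (a2 *\<^sub>R Xaa (\<phi> u0) + b2 *\<^sub>R Xab (\<phi> u0)) + b1 *\<^sub>R (a2 *\<^sub>R Xab (\<phi> u0) + b2 *\<^sub>R Xbb (\<phi> u0)))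
     (fst (partial2 (partial2 \<phi>) u0) *\<^sub>R Xa (\<phi> u0) + snd (partial2 (partial2 \<phi>) u0) *\<^sub>R Xb (\<phi> u0)
        + a2 *\<^sub>R (a2 *\<^sub>R Xaa (\<phi> u0) + b2 *\<^sub>R Xab (\<phi> u0)) + b2 *\<^sub>R (a2 *\<^sub>R Xab (\<phi> u0) + b2 *\<^sub>R Xbb (\<phi> u0))))"
    using mean_curv_vec_mc[of "X \<circ> \<phi>" u0] e1 e2 e3 e4 e5 by metis
  also have "\<dots> = norm (mc (Xa (\<phi> u0)) (Xb (\<phi> u0)) (Xaa (\<phi> u0)) (Xab (\<phi> u0)) (Xbb (\<phi> u0)))"
    by (rule mc_invariant[OF refl det])
  finally have "norm (mean_curv_vec (F \<circ> q) u0) = norm (mc (Xa z0) (Xb z0) (Xaa z0) (Xab z0) (Xbb z0))"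
    using mcv phi0 by simp
  then have "norm (mean_curv_vec (F \<circ> q) u0) = norm (mc (Lr v 1 (cos th) (sin th) (\<beta>1 t0)) (Lr v 0 (- sin th) (cos th) (\<beta> t0 - a))
        (Lr v 1 (cos th) (sin th) (\<beta>2 t0)) (Lr v 0 (- sin th) (cos th) (\<beta>1 t0)) (Lr v 0 (- cos th) (- sin th) (\<beta> t0 - a)))"
    unfolding z0_def Xa_def Xb_def Xaa_def Xab_def Xbb_def by simp
  then show ?thesis using Uq(1,2) by blast
qed




lemma dot_deriv:
  fixes f :: "real \<Rightarrow> real^3"
  assumes "(f has_vector_derivative f') (at t)"
  shows "((\<lambda>t. (f t - c) \<bullet> v) has_real_derivative (f' \<bullet> v)) (at t)"
proof -
  have "((\<lambda>t. f t - c) has_vector_derivative f') (at t)" using assms by (auto intro!: derivative_eq_intros)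
  from bounded_linear.has_vector_derivative[OF bounded_linear_inner_left this, of v]
  show ?thesis by (simp add: has_real_derivative_iff_has_vector_derivative)
qed

lemma dot_deriv0:
  fixes f :: "real \<Rightarrow> real^3"
  assumes "(f has_vector_derivative f') (at t)"
  shows "((\<lambda>t. f t \<bullet> v) has_real_derivative (f' \<bullet> v)) (at t)"
  using dot_deriv[OF assms, of 0 v] by simp

lemma dist_bound:
  fixes d v w :: "real^3"
  assumes v: "v \<bullet> v = 1" and w: "w \<bullet> w = 1" and vw: "v \<bullet> w = 0" and co: "co^2 = 1" and cd: "co * (d \<bullet> w) \<ge> 0"
    and y: "y \<ge> 0"
  shows "(x + d \<bullet> v)^2 + y^2 \<le> (norm (d + x *\<^sub>R v + (co * y) *\<^sub>R w))^2"
proof -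
  have cs: "(d \<bullet> v)^2 \<le> d \<bullet> d" using Cauchy_Schwarz_ineq[of d v] v by simp
  have "(norm (d + x *\<^sub>R v + (co * y) *\<^sub>R w))^2 = d \<bullet> d + x^2 + co^2 * y^2 + 2 * x * (d \<bullet> v) + 2 * y * (co * (d \<bullet> w))"
    unfolding power2_norm_eq_inner using v w vw
    by (simp add: inner_add_left inner_add_right inner_commute power2_eq_square algebra_simps)
  also have "\<dots> \<ge> (x + d \<bullet> v)^2 + y^2"
  proof -
    have "0 \<le> y * (co * (d \<bullet> w))" using cd y by simp
    then show ?thesis using cs co by (simp add: power2_eq_square algebra_simps)
  qed
  finally show ?thesis .
qed

lemma decomp_pm:
  assumes v: "v \<bullet> v = 1" and n: "n \<bullet> n = 1" and vn: "v \<bullet> n = 0" and z: "z \<bullet> n = 0"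
    and w: "w = cross3 n v \<or> w = - cross3 n v"
  shows "z = (z \<bullet> v) *\<^sub>R v + (z \<bullet> w) *\<^sub>R w"
  using frame_decomp[OF v n vn z] w by auto

lemma deriv_zero_on:
  fixes g :: "real \<Rightarrow> real"
  assumes "(g has_real_derivative D) (at t)" "t > 0" "\<And>s. s > 0 \<Longrightarrow> g s = 0"
  shows "D = 0"
proof -
  have "((\<lambda>s. 0) has_real_derivative D) (at t)"
    by (rule has_field_derivative_transform_within_open[OF assms(1), of "{0<..}"]) (use assms in auto)
  then show ?thesis using DERIV_const DERIV_unique by blast
qed


theorem corollary9p1:
  fixes M :: "'a set"
    and A :: "((real \<times> real) set \<times> (real \<times> real \<Rightarrow> 'a)) set"
    and F :: "'a \<Rightarrow> real^3"
    and c :: "real^3" and R :: real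
  assumes "R > 0"
    and "surface_immersion M A F"
    and "F ` M \<subseteq> ball c R"
    and "has_revolution_end M A F"
  shows "(SUP UPU \<in> {(U, p, u). (U, p) \<in> A \<and> u \<in> U}.
            ereal (norm (mean_curv_vec (F \<circ> fst (snd UPU)) (snd (snd UPU)))))
         \<ge> ereal (1 / R)"
proof (rule ccontr)
  define S where "S = (SUP UPU \<in> {(U, p, u). (U, p) \<in> A \<and> u \<in> U}.
            ereal (norm (mean_curv_vec (F \<circ> fst (snd UPU)) (snd (snd UPU)))))"
  assume "\<not> S \<ge> ereal (1 / R)"
  then have lt: "S < ereal (1 / R)" unfolding S_def by simp
  define h where "h = max 0 (real_of_ereal S)"
  have h0: "h \<ge> 0" unfolding h_def by simp
  have Sh: "S \<le> ereal h" using lt by (cases S) (auto simp: h_def)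
  have h1: "h < 1 / R" using lt \<open>R > 0\<close> by (cases S) (auto simp: h_def)
  have hR: "h * R < 1" using h1 \<open>R > 0\<close> by (simp add: field_simps)
  have hb: "norm (mean_curv_vec (F \<circ> q) u) \<le> h" if "(U, q) \<in> A" "u \<in> U" for U q u
  proof -
    have "ereal (norm (mean_curv_vec (F \<circ> q) u)) \<le> S"
      unfolding S_def using that by (intro SUP_upper2[of "(U, q, u)"]) auto
    then have "ereal (norm (mean_curv_vec (F \<circ> q) u)) \<le> ereal h" using Sh by (rule order_trans)
    then show ?thesis by simp
  qed
  obtain a v n \<beta> p K where rd: "revolution_end_data a v n \<beta>"
    and per: "\<forall>t \<theta>. p (t, \<theta> + 2 * pi) = p (t, \<theta>)"
    and inj: "inj_on p {z. fst z \<ge> 0 \<and> 0 \<le> snd z \<and> snd z < 2 * pi}"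
    and comp: "\<forall>V. open V \<and> V \<subseteq> {z. fst z > 0} \<and> inj_on p V \<longrightarrow>
             (\<forall>P \<in> A. compatible_params (V, p) P \<and> compatible_params P (V, p))"
    and cc: "p ` {z. fst z > 0} \<in> connected_components_of (subtopology (surf_top M A) (M - K))"
    and Fp: "\<forall>z. fst z \<ge> 0 \<longrightarrow> F (p z) = revolution_map a v \<beta> z"
    using assms(4) unfolding has_revolution_end_def by (elim exE conjE) (rule that; assumption)
  have per': "\<And>t \<theta>. p (t, \<theta> + 2 * pi) = p (t, \<theta>)" using per by blast
  have Fp': "\<And>z. fst z \<ge> 0 \<Longrightarrow> F (p z) = revolution_map a v \<beta> z" using Fp by blast
  have pM: "p z \<in> M" if "fst z > 0" for z
    using connected_components_of_subset[OF cc] that by auto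
  have vv: "v \<bullet> v = 1" and nn: "n \<bullet> n = 1" and vn: "v \<bullet> n = 0"
    using rd unfolding revolution_end_data_def by (auto simp: power2_norm_eq_inner[symmetric])
  have pl: "\<And>t. t \<ge> 0 \<Longrightarrow> (\<beta> t - a) \<bullet> n = 0"
    and offax: "\<And>t s. t \<ge> 0 \<Longrightarrow> \<beta> t \<noteq> a + s *\<^sub>R v"
    and smc: "smooth_curve_on {0..} \<beta>"
    and reg: "\<And>t. t \<ge> 0 \<Longrightarrow> vector_derivative \<beta> (at t within {0..}) \<noteq> 0"
    and len0: "\<And>B. \<exists>T \<ge> 0. integral {0..T} (\<lambda>t. norm (vector_derivative \<beta> (at t within {0..}))) > B"
    using rd unfolding revolution_end_data_def by auto
  define \<beta>1 where "\<beta>1 = (\<lambda>t. vector_derivative \<beta> (at t within {0..}))"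
  define \<beta>2 where "\<beta>2 = (\<lambda>t. vector_derivative \<beta>1 (at t within {0..}))"
  have cd0: "\<beta> \<in> curve_derivs {0..} \<beta>" by (rule curve_derivs.base)
  have cd1: "\<beta>1 \<in> curve_derivs {0..} \<beta>" unfolding \<beta>1_def by (rule curve_derivs.step[OF cd0])
  have cd2: "\<beta>2 \<in> curve_derivs {0..} \<beta>" unfolding \<beta>2_def by (rule curve_derivs.step[OF cd1])
  have df0: "\<beta> differentiable (at t within {0..})" and df1: "\<beta>1 differentiable (at t within {0..})"
    if "t \<ge> 0" for t
    using smc cd0 cd1 that unfolding smooth_curve_on_def by auto
  have atw: "at t within {0..} = at t" if "t > (0::real)" for t
    by (rule at_within_interior) (use that in \<open>simp add: interior_real_atLeast\<close>)
  have d0: "(\<beta> has_vector_derivative \<beta>1 t) (at t)" if "t > 0" for t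
    using df0[of t] that atw[OF that] unfolding \<beta>1_def by (simp add: vector_derivative_works)
  have d1: "(\<beta>1 has_vector_derivative \<beta>2 t) (at t)" if "t > 0" for t
    using df1[of t] that atw[OF that] unfolding \<beta>2_def by (simp add: vector_derivative_works)
  have cont0: "continuous_on {0..} \<beta>"
    using df0 by (auto simp: continuous_on_eq_continuous_within intro: differentiable_imp_continuous_within)
  have cont1: "continuous_on {0..} \<beta>1"
    using df1 by (auto simp: continuous_on_eq_continuous_within intro: differentiable_imp_continuous_within)
  define w0 where "w0 = cross3 n v"
  define y0 where "y0 t = (\<beta> t - a) \<bullet> w0" for t
  have y0nz: "y0 t \<noteq> 0" if "t \<ge> 0" for t
  proof
    assume "y0 t = 0"
    then have "\<beta> t - a = ((\<beta> t - a) \<bullet> v) *\<^sub>R v"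
      using frame_decomp[OF vv nn vn pl[OF that]] unfolding y0_def w0_def by simp
    then have "\<beta> t = a + ((\<beta> t - a) \<bullet> v) *\<^sub>R v" by (simp add: algebra_simps)
    then show False using offax[OF that] by blast
  qed
  have y0c: "continuous_on {0..T} y0" for T
    unfolding y0_def by (intro continuous_intros continuous_on_subset[OF cont0]) auto
  define w where "w = (if y0 0 > 0 then w0 else - w0)"
  have wpm: "w = cross3 n v \<or> w = - cross3 n v" unfolding w_def w0_def by auto
  have ypos: "(\<beta> t - a) \<bullet> w > 0" if t: "t \<ge> 0" for t
  proof (cases "y0 0 > 0")
    case True
    have "y0 t > 0"
    proof (rule ccontr)
      assume "\<not> y0 t > 0"
      then have "y0 t \<le> 0" by simp
      then obtain s where "0 \<le> s" "s \<le> t" "y0 s = 0" using IVT2'[of y0 t 0 0, OF _ _ t y0c] True by auto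
      then show False using y0nz by auto
    qed
    then show ?thesis using True unfolding w_def y0_def by simp
  next
    case False
    then have f0: "y0 0 < 0" using y0nz[of 0] by simp
    have "y0 t < 0"
    proof (rule ccontr)
      assume "\<not> y0 t < 0"
      then have "y0 t \<ge> 0" by simp
      then obtain s where "0 \<le> s" "s \<le> t" "y0 s = 0" using IVT'[of y0 0 0 t, OF _ _ t y0c] f0 by auto
      then show False using y0nz by auto
    qed
    then show ?thesis using False unfolding w_def y0_def by simp
  qed
  have ww: "w \<bullet> w = 1" and vw: "v \<bullet> w = 0"
  proof -
    have "w0 \<bullet> w0 = 1" unfolding w0_def by (rule norm1_cross) (use nn vv vn in \<open>simp_all add: inner_commute\<close>)
    then show "w \<bullet> w = 1" unfolding w_def by simp
    have "v \<bullet> w0 = 0" unfolding w0_def by (simp add: dot_cross_self)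
    then show "v \<bullet> w = 0" unfolding w_def by simp
  qed
  note dec = decomp_pm[OF vv nn vn _ wpm]
  have n1: "\<beta>1 t \<bullet> n = 0" if "t > 0" for t
    by (rule deriv_zero_on[OF dot_deriv[OF d0[OF that], of a n] that]) (use pl in auto)
  have n2: "\<beta>2 t \<bullet> n = 0" if "t > 0" for t
    by (rule deriv_zero_on[OF dot_deriv0[OF d1[OF that], of n] that]) (use n1 in auto)
  define xt where "xt t = (\<beta> t - c) \<bullet> v" for t
  define y where "y t = (\<beta> t - a) \<bullet> w" for t
  define x1 where "x1 t = \<beta>1 t \<bullet> v" for t
  define y1 where "y1 t = \<beta>1 t \<bullet> w" for t
  define x2 where "x2 t = \<beta>2 t \<bullet> v" for t
  define y2 where "y2 t = \<beta>2 t \<bullet> w" for t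
  have B0: "\<beta> t - a = ((\<beta> t - a) \<bullet> v) *\<^sub>R v + y t *\<^sub>R w" if "t \<ge> 0" for t
    unfolding y_def by (rule dec[OF pl[OF that]])
  have B1: "\<beta>1 t = x1 t *\<^sub>R v + y1 t *\<^sub>R w" if "t > 0" for t
    unfolding x1_def y1_def by (rule dec[OF n1[OF that]])
  have B2: "\<beta>2 t = x2 t *\<^sub>R v + y2 t *\<^sub>R w" if "t > 0" for t
    unfolding x2_def y2_def by (rule dec[OF n2[OF that]])
  have dxt: "(xt has_real_derivative x1 t) (at t)" if "t > 0" for t
    unfolding xt_def[abs_def] x1_def by (rule dot_deriv[OF d0[OF that]])
  have dy: "(y has_real_derivative y1 t) (at t)" if "t > 0" for t
    unfolding y_def[abs_def] y1_def by (rule dot_deriv[OF d0[OF that]])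
  have dx1: "(x1 has_real_derivative x2 t) (at t)" if "t > 0" for t
    unfolding x1_def[abs_def] x2_def by (rule dot_deriv0[OF d1[OF that]])
  have dy1: "(y1 has_real_derivative y2 t) (at t)" if "t > 0" for t
    unfolding y1_def[abs_def] y2_def by (rule dot_deriv0[OF d1[OF that]])
  have yp: "y t > 0" if "t > 0" for t unfolding y_def using ypos that by simp
  have sp: "x1 t^2 + y1 t^2 > 0" if t: "t > 0" for t
  proof (rule ccontr)
    assume "\<not> x1 t^2 + y1 t^2 > 0"
    then have "x1 t = 0 \<and> y1 t = 0" using sum_power2_gt_zero_iff[of "x1 t" "y1 t"] by auto
    then have "\<beta>1 t = 0" using B1[OF t] by simp
    then show False using reg[of t] t unfolding \<beta>1_def by simp
  qed
  have bd: "xt t^2 + y t^2 \<le> R^2" if t: "t > 0" for t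
  proof -
    define d where "d = a - c"
    define th where "th = (if d \<bullet> w \<ge> 0 then 0 else pi)"
    define co where "co = cos th"
    have co: "co^2 = 1" "co * (d \<bullet> w) \<ge> 0" "sin th = 0" unfolding co_def th_def by auto
    have "F (p (t, th)) \<in> ball c R" using assms(3) pM[of "(t,th)"] t by auto
    moreover have "F (p (t, th)) = a + Lr v 1 co (sin th) (\<beta> t - a)"
      using Fp t by (simp add: revolution_map_def rot_Lr co_def)
    moreover have "Lr v 1 co (sin th) (\<beta> t - a) = ((\<beta> t - a) \<bullet> v) *\<^sub>R v + (co * y t) *\<^sub>R w"
      using B0[of t] t Lr_frame[OF vv vw, of 1 co "sin th" "(\<beta> t - a) \<bullet> v" "y t"] co(3) by simp
    ultimately have "norm (d + ((\<beta> t - a) \<bullet> v) *\<^sub>R v + (co * y t) *\<^sub>R w) < R"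
      unfolding d_def by (simp add: dist_norm algebra_simps norm_minus_commute)
    moreover have "(((\<beta> t - a) \<bullet> v) + d \<bullet> v)^2 + (y t)^2 \<le> (norm (d + ((\<beta> t - a) \<bullet> v) *\<^sub>R v + (co * y t) *\<^sub>R w))^2"
      by (rule dist_bound[OF vv ww vw co(1) co(2)]) (use yp[OF t] in simp)
    moreover have "((\<beta> t - a) \<bullet> v) + d \<bullet> v = xt t" unfolding xt_def d_def by (simp add: inner_diff_left)
    ultimately show ?thesis using \<open>R > 0\<close>
      by (smt (verit) norm_ge_zero power_mono)
  qed
  have kb: "\<bar>x1 t/(sqrt(x1 t^2+y1 t^2) * y t) - (x1 t * y2 t - x2 t * y1 t)/sqrt(x1 t^2+y1 t^2)^3\<bar> \<le> 2 * h"
    if t: "t > 0" for t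
  proof -
    obtain U q u where Uq: "(U, q) \<in> A" "u \<in> U" and eq: "norm (mean_curv_vec (F \<circ> q) u) =
      norm (mc (Lr v 1 (cos 0) (sin 0) (\<beta>1 t)) (Lr v 0 (- sin 0) (cos 0) (\<beta> t - a))
        (Lr v 1 (cos 0) (sin 0) (\<beta>2 t)) (Lr v 0 (- sin 0) (cos 0) (\<beta>1 t)) (Lr v 0 (- cos 0) (- sin 0) (\<beta> t - a)))"
      using transfer[OF assms(2) pM per' inj comp Fp' d0 d1 t, where th=0] by blast
    define xa where "xa = (\<beta> t - a) \<bullet> v"
    have B0': "\<beta> t - a = xa *\<^sub>R v + y t *\<^sub>R w" unfolding xa_def by (rule B0) (use t in simp)
    have "norm (mc (Lr v 1 (cos 0) (sin 0) (\<beta>1 t)) (Lr v 0 (- sin 0) (cos 0) (\<beta> t - a))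
        (Lr v 1 (cos 0) (sin 0) (\<beta>2 t)) (Lr v 0 (- sin 0) (cos 0) (\<beta>1 t)) (Lr v 0 (- cos 0) (- sin 0) (\<beta> t - a)))
      = \<bar>x1 t/(sqrt(x1 t^2+y1 t^2) * y t) - (x1 t * y2 t - x2 t * y1 t)/sqrt(x1 t^2+y1 t^2)^3\<bar> / 2"
      unfolding B1[OF t] B2[OF t] B0'
      by (intro rev_mc[OF vv ww vw yp[OF t] sp[OF t]]) 
    then show ?thesis using hb[OF Uq] eq by simp
  qed
  have len: "\<exists>T\<ge>1. integral {1..T} (\<lambda>t. sqrt(x1 t^2+y1 t^2)) > B" for B
  proof -
    define g where "g t = norm (\<beta>1 t)" for t
    have gc: "continuous_on {0..T} g" for T
      unfolding g_def by (intro continuous_intros continuous_on_subset[OF cont1]) auto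
    have gi: "g integrable_on {a'..b'}" if "a' \<ge> 0" for a' b'
      using integrable_continuous_real[OF continuous_on_subset[OF gc[of b']]] that by auto
    define C where "C = integral {0..1} g"
    obtain T where T: "T \<ge> 0" "integral {0..T} g > max B 0 + C"
      using len0[of "max B 0 + C"] unfolding g_def \<beta>1_def by auto
    have T1: "T \<ge> 1"
    proof (rule ccontr)
      assume "\<not> T \<ge> 1"
      then have "integral {0..T} g \<le> C" unfolding C_def
        by (intro integral_subset_le gi) (auto simp: g_def)
      then show False using T by simp
    qed
    have "integral {0..1} g + integral {1..T} g = integral {0..T} g"
      by (rule Henstock_Kurzweil_Integration.integral_combine) (use T1 gi in auto)
    then have "integral {1..T} g > B" using T C_def by simp
    moreover have "integral {1..T} g = integral {1..T} (\<lambda>t. sqrt(x1 t^2+y1 t^2))"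
    proof (rule integral_cong)
      fix t assume "t \<in> {1..T}"
      then have t: "t > 0" by simp
      have "norm (\<beta>1 t) = sqrt ((x1 t *\<^sub>R v + y1 t *\<^sub>R w) \<bullet> (x1 t *\<^sub>R v + y1 t *\<^sub>R w))"
        using B1[OF t] by (simp add: norm_eq_sqrt_inner)
      also have "\<dots> = sqrt (x1 t^2 + y1 t^2)" using vv ww vw
        by (simp add: inner_add_left inner_add_right inner_commute power2_eq_square)
      finally show "g t = sqrt (x1 t^2 + y1 t^2)" unfolding g_def .
    qed
    ultimately show ?thesis using T1 by auto
  qed
  show False
    by (rule profile_false[OF \<open>R > 0\<close> h0 hR dxt dy dx1 dy1 yp sp bd kb len])
qed


end
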